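(* Let $Z\subset\mathbb{S}_1$ be a finite nonempty set of points. If there is an integer $m\ge 1$ such that $\alpha(mZ)=\alpha((m+1)Z)=\alpha((m+2)Z)=\alpha((m+3)Z)=\alpha((m+4)Z)$, then $Z$ consists of a single point.
   Context: Let $P_1\in\mathbb{P}^2(\mathbb{C})$ be a point and $f\colon\mathbb{S}_1\to\mathbb{P}^2$ the blow-up of $\mathbb{P}^2$ at $P_1$, with exceptional curve $E_1=f^{-1}(P_1)$; let $H$ be the pullback of the class of a line. Let $\mathbb{L}_1=3H-E_1=-K_{\mathbb{S}_1}$. For a finite set $Z\subset\mathbb{S}_1$ with ideal sheaf $\mathcal{I}_Z$ and a positive integer $m$, the initial degree is $\alpha(mZ)=\min\{d\ge 0:\ H^0(\mathbb{S}_1,d\mathbb{L}_1\otimes\mathcal{I}_Z^{(m)})\neq 0\}$, i.e. the least $d$ such that some effective divisor $D\in|d\mathbb{L}_1|$ has multiplicity at least $m$ at every point of $Z$. *)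

theory Defs
  imports Complex_Main
begin

text \<open>Coordinates: P1 = [0:0:1] in P^2 (WLOG, by a projective change of coordinates).
A section of d*L1 = d(3H - E1) is a homogeneous cubic-degree form F of degree 3d in x,y,z
with multiplicity at least d at P1; it is encoded by its coefficient function
c i j k (coefficient of x^i y^j z^k).\<close>

definition sect :: "nat \<Rightarrow> (nat \<Rightarrow> nat \<Rightarrow> nat \<Rightarrow> complex) \<Rightarrow> bool" where
  "sect d c \<longleftrightarrow> (\<forall>i j k. c i j k \<noteq> 0 \<longrightarrow> i + j + k = 3 * d \<and> d \<le> i + j)"

text \<open>Points of S1: points of P^2 other than P1 (normalised representatives), and points
of the exceptional curve E1 = tangent directions [a:b] at P1 (normalised).\<close>

datatype s1pt = Base "complex \<times> complex \<times> complex" | Exc "complex \<times> complex"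

definition normP2 :: "complex \<times> complex \<times> complex \<Rightarrow> bool" where
  "normP2 p \<longleftrightarrow> (case p of (x, y, z) \<Rightarrow>
      x = 1 \<or> (x = 0 \<and> y = 1) \<or> (x = 0 \<and> y = 0 \<and> z = 1))"

definition normP1 :: "complex \<times> complex \<Rightarrow> bool" where
  "normP1 q \<longleftrightarrow> (case q of (a, b) \<Rightarrow> a = 1 \<or> (a = 0 \<and> b = 1))"

fun valid_pt :: "s1pt \<Rightarrow> bool" where
  "valid_pt (Base p) \<longleftrightarrow> normP2 p \<and> p \<noteq> (0, 0, 1)"
| "valid_pt (Exc q) \<longleftrightarrow> normP1 q"

text \<open>mult_ge d c m q: the divisor D = f^*F - d E1 of the section c of d*L1 has
multiplicity at least m at q.  Off E1 this is the multiplicity of F at the point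
(all Taylor coefficients of F(p + w) of degree < m vanish).  On E1 we use the blow-up
charts (u,v) \<mapsto> (u, u v) and (u,w) \<mapsto> (u w, u) of the affine chart z = 1, where the local
equation of D is u^(-d) F(u, u v, 1), resp. u^(-d) F(u w, u, 1).\<close>

fun mult_ge :: "nat \<Rightarrow> (nat \<Rightarrow> nat \<Rightarrow> nat \<Rightarrow> complex) \<Rightarrow> nat \<Rightarrow> s1pt \<Rightarrow> bool" where
  "mult_ge d c m (Base (p1, p2, p3)) \<longleftrightarrow>
     (\<forall>a b e. a + b + e < m \<longrightarrow>
        (\<Sum>i\<le>3*d. \<Sum>j\<le>3*d. \<Sum>k\<le>3*d.
           c i j k * of_nat (i choose a) * of_nat (j choose b) * of_nat (k choose e)
           * p1 ^ (i - a) * p2 ^ (j - b) * p3 ^ (k - e)) = 0)"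
| "mult_ge d c m (Exc (a, b)) \<longleftrightarrow>
     (if a \<noteq> 0 then
        (\<forall>s t. s + t < m \<longrightarrow>
          (\<Sum>i\<le>3*d. \<Sum>j\<le>3*d. \<Sum>k\<le>3*d.
             if i + j = s + d then c i j k * of_nat (j choose t) * (b / a) ^ (j - t) else 0) = 0)
      else
        (\<forall>s t. s + t < m \<longrightarrow>
          (\<Sum>i\<le>3*d. \<Sum>j\<le>3*d. \<Sum>k\<le>3*d.
             if i + j = s + d then c i j k * of_nat (i choose t) * (a / b) ^ (i - t) else 0) = 0))"

definition alpha :: "s1pt set \<Rightarrow> nat \<Rightarrow> nat" where
  "alpha Z m = (LEAST d. \<exists>c. sect d c \<and> (\<exists>i j k. c i j k \<noteq> 0) \<and> (\<forall>q\<in>Z. mult_ge d c m q))"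

end

theory Submission
  imports Defs "HOL-Computational_Algebra.Polynomial"
begin

definition hom :: "nat \<Rightarrow> (nat \<Rightarrow> nat \<Rightarrow> nat \<Rightarrow> complex) \<Rightarrow> bool" where
  "hom n c \<longleftrightarrow> (\<forall>i j k. c i j k \<noteq> 0 \<longrightarrow> i + j + k = n)"
definition bnd :: "nat \<Rightarrow> (nat \<Rightarrow> nat \<Rightarrow> nat \<Rightarrow> complex) \<Rightarrow> bool" where
  "bnd N c \<longleftrightarrow> (\<forall>i j k. c i j k \<noteq> 0 \<longrightarrow> i \<le> N \<and> j \<le> N \<and> k \<le> N)"
definition p1m :: "nat \<Rightarrow> (nat \<Rightarrow> nat \<Rightarrow> nat \<Rightarrow> complex) \<Rightarrow> bool" where
  "p1m u c \<longleftrightarrow> (\<forall>i j k. c i j k \<noteq> 0 \<longrightarrow> u \<le> i + j)"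
definition zb :: "nat \<Rightarrow> (nat \<Rightarrow> nat \<Rightarrow> nat \<Rightarrow> complex) \<Rightarrow> bool" where
  "zb r c \<longleftrightarrow> (\<forall>i j k. c i j k \<noteq> 0 \<longrightarrow> k \<le> r)"

definition dx :: "(nat \<Rightarrow> nat \<Rightarrow> nat \<Rightarrow> complex) \<Rightarrow> nat \<Rightarrow> nat \<Rightarrow> nat \<Rightarrow> complex" where
  "dx c i j k = of_nat (Suc i) * c (Suc i) j k"
definition dy :: "(nat \<Rightarrow> nat \<Rightarrow> nat \<Rightarrow> complex) \<Rightarrow> nat \<Rightarrow> nat \<Rightarrow> nat \<Rightarrow> complex" where
  "dy c i j k = of_nat (Suc j) * c i (Suc j) k"
definition dz :: "(nat \<Rightarrow> nat \<Rightarrow> nat \<Rightarrow> complex) \<Rightarrow> nat \<Rightarrow> nat \<Rightarrow> nat \<Rightarrow> complex" where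
  "dz c i j k = of_nat (Suc k) * c i j (Suc k)"
definition swp :: "(nat \<Rightarrow> nat \<Rightarrow> nat \<Rightarrow> complex) \<Rightarrow> nat \<Rightarrow> nat \<Rightarrow> nat \<Rightarrow> complex" where
  "swp c i j k = c j i k"

lemma hom_bnd: "hom n c \<Longrightarrow> n \<le> N \<Longrightarrow> bnd N c"
  unfolding hom_def bnd_def by fastforce

lemma hom_dx: "hom n c \<Longrightarrow> hom (n - 1) (dx c)" unfolding hom_def dx_def by fastforce
lemma hom_dy: "hom n c \<Longrightarrow> hom (n - 1) (dy c)" unfolding hom_def dy_def by fastforce
lemma hom_dz: "hom n c \<Longrightarrow> hom (n - 1) (dz c)" unfolding hom_def dz_def by fastforce
lemma hom_swp: "hom n c \<Longrightarrow> hom n (swp c)" unfolding hom_def swp_def by fastforce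
lemma bnd_dx: "bnd n c \<Longrightarrow> bnd n (dx c)" unfolding bnd_def dx_def by fastforce
lemma bnd_dy: "bnd n c \<Longrightarrow> bnd n (dy c)" unfolding bnd_def dy_def by fastforce
lemma bnd_dz: "bnd n c \<Longrightarrow> bnd n (dz c)" unfolding bnd_def dz_def by fastforce
lemma bnd_swp: "bnd n c \<Longrightarrow> bnd n (swp c)" unfolding bnd_def swp_def by fastforce
lemma p1m_dx: "p1m u c \<Longrightarrow> p1m (u - 1) (dx c)" unfolding p1m_def dx_def by fastforce
lemma p1m_dy: "p1m u c \<Longrightarrow> p1m (u - 1) (dy c)" unfolding p1m_def dy_def by fastforce
lemma p1m_dz: "p1m u c \<Longrightarrow> p1m u (dz c)" unfolding p1m_def dz_def by fastforce
lemma p1m_swp: "p1m u c \<Longrightarrow> p1m u (swp c)" unfolding p1m_def swp_def by fastforce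
lemma zb_dx: "zb r c \<Longrightarrow> zb r (dx c)" unfolding zb_def dx_def by fastforce
lemma zb_dy: "zb r c \<Longrightarrow> zb r (dy c)" unfolding zb_def dy_def by fastforce
lemma zb_dz: "zb (Suc r) c \<Longrightarrow> zb r (dz c)" unfolding zb_def dz_def by fastforce
lemma swp_dx: "swp (dx c) = dy (swp c)" unfolding swp_def dx_def dy_def by (intro ext) simp
lemma swp_dy: "swp (dy c) = dx (swp c)" unfolding swp_def dx_def dy_def by (intro ext) simp
lemma swp_dz: "swp (dz c) = dz (swp c)" unfolding swp_def dz_def by (intro ext) simp
lemma swp_swp: "swp (swp c) = c" unfolding swp_def by (intro ext) simp

lemma bnd_Suc: assumes "bnd N c" shows "c (Suc N) j k = 0" "c i (Suc N) k = 0" "c i j (Suc N) = 0"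
  using assms unfolding bnd_def by (meson Suc_n_not_le_n)+

lemma sum_shift0:
  fixes G :: "nat \<Rightarrow> complex"
  assumes "G 0 = 0" "G (Suc N) = 0"
  shows "(\<Sum>i\<le>N. G (Suc i)) = (\<Sum>i\<le>N. G i)"
proof -
  have "(\<Sum>i\<le>Suc N. G i) = G 0 + (\<Sum>i\<le>N. G (Suc i))" by (rule sum.atMost_Suc_shift)
  moreover have "(\<Sum>i\<le>Suc N. G i) = (\<Sum>i\<le>N. G i) + G (Suc N)" by simp
  ultimately show ?thesis using assms by simp
qed

lemma shift1:
  fixes h :: "nat \<Rightarrow> complex"
  assumes "h (Suc N) = 0"
  shows "(\<Sum>i\<le>N. of_nat (Suc i) * h (Suc i) * of_nat (i choose a) * x ^ (i - a))
       = of_nat (Suc a) * (\<Sum>i\<le>N. h i * of_nat (i choose Suc a) * x ^ (i - Suc a))"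
proof -
  have "(\<Sum>i\<le>N. of_nat (Suc i) * h (Suc i) * of_nat (i choose a) * x ^ (i - a))
      = (\<Sum>i\<le>N. (\<lambda>i. of_nat (Suc a) * (h i * of_nat (i choose Suc a) * x ^ (i - Suc a))) (Suc i))"
  proof (intro sum.cong refl)
    fix i
    have "of_nat (Suc i) * of_nat (i choose a) = (of_nat (Suc a) * of_nat (Suc i choose Suc a) :: complex)"
      using Suc_times_binomial_eq[of i a] by (metis mult.commute of_nat_mult)
    then show "of_nat (Suc i) * h (Suc i) * of_nat (i choose a) * x ^ (i - a) =
         (\<lambda>i. of_nat (Suc a) * (h i * of_nat (i choose Suc a) * x ^ (i - Suc a))) (Suc i)"
    proof -
      have "of_nat (Suc i) * h (Suc i) * of_nat (i choose a) * x ^ (i - a)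
          = h (Suc i) * x ^ (i - a) * (of_nat (Suc i) * of_nat (i choose a))" by (simp add: ac_simps)
      also have "\<dots> = h (Suc i) * x ^ (i - a) * (of_nat (Suc a) * of_nat (Suc i choose Suc a))"
        by (simp only: \<open>of_nat (Suc i) * of_nat (i choose a) = _\<close>)
      finally show ?thesis by (simp add: ac_simps)
    qed
  qed
  also have "\<dots> = (\<Sum>i\<le>N. of_nat (Suc a) * (h i * of_nat (i choose Suc a) * x ^ (i - Suc a)))"
    by (rule sum_shift0) (use assms in simp_all)
  finally show ?thesis by (simp add: sum_distrib_left)
qed

definition BT :: "nat \<Rightarrow> (nat \<Rightarrow> nat \<Rightarrow> nat \<Rightarrow> complex) \<Rightarrow> nat \<Rightarrow> nat \<Rightarrow> nat \<Rightarrow> complex \<times> complex \<times> complex \<Rightarrow> complex" where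
  "BT N c a b e p = (case p of (p1, p2, p3) \<Rightarrow>
     (\<Sum>i\<le>N. \<Sum>j\<le>N. \<Sum>k\<le>N.
           c i j k * of_nat (i choose a) * of_nat (j choose b) * of_nat (k choose e)
           * p1 ^ (i - a) * p2 ^ (j - b) * p3 ^ (k - e)))"

lemma BT_dx:
  assumes "bnd N c"
  shows "BT N (dx c) a b e p = of_nat (Suc a) * BT N c (Suc a) b e p"
proof -
  obtain x y z where p: "p = (x, y, z)" by (cases p) auto
  define h where "h i = (\<Sum>j\<le>N. \<Sum>k\<le>N. c i j k * of_nat (j choose b) * of_nat (k choose e) * y ^ (j - b) * z ^ (k - e))" for i
  have "BT N (dx c) a b e p = (\<Sum>i\<le>N. of_nat (Suc i) * h (Suc i) * of_nat (i choose a) * x ^ (i - a))"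
    unfolding p BT_def h_def dx_def by (simp add: sum_distrib_left sum_distrib_right ac_simps)
  also have "\<dots> = of_nat (Suc a) * (\<Sum>i\<le>N. h i * of_nat (i choose Suc a) * x ^ (i - Suc a))"
    by (rule shift1) (use assms in \<open>simp add: h_def bnd_Suc\<close>)
  also have "\<dots> = of_nat (Suc a) * BT N c (Suc a) b e p"
    unfolding p BT_def h_def by (simp add: sum_distrib_left sum_distrib_right ac_simps)
  finally show ?thesis .
qed

lemma BT_swp: "BT N (swp c) a b e (x, y, z) = BT N c b a e (y, x, z)"
  unfolding BT_def swp_def
  by (subst sum.swap) (simp add: ac_simps)

lemma BT_dy:
  assumes "bnd N c"
  shows "BT N (dy c) a b e (x, y, z) = of_nat (Suc b) * BT N c a (Suc b) e (x, y, z)"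
proof -
  have "dy c = swp (dx (swp c))" by (simp add: swp_dx swp_swp)
  then have "BT N (dy c) a b e (x, y, z) = BT N (dx (swp c)) b a e (y, x, z)" by (simp add: BT_swp)
  also have "\<dots> = of_nat (Suc b) * BT N (swp c) (Suc b) a e (y, x, z)"
    by (rule BT_dx) (use assms bnd_swp in auto)
  also have "\<dots> = of_nat (Suc b) * BT N c a (Suc b) e (x, y, z)" by (simp add: BT_swp)
  finally show ?thesis .
qed

lemma BT_dz:
  assumes "bnd N c"
  shows "BT N (dz c) a b e p = of_nat (Suc e) * BT N c a b (Suc e) p"
proof -
  obtain x y z where p: "p = (x, y, z)" by (cases p) auto
  have "BT N (dz c) a b e p = (\<Sum>i\<le>N. \<Sum>j\<le>N. of_nat (i choose a) * of_nat (j choose b) * x ^ (i - a) * y ^ (j - b) *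
     (\<Sum>k\<le>N. of_nat (Suc k) * c i j (Suc k) * of_nat (k choose e) * z ^ (k - e)))"
    unfolding p BT_def dz_def by (simp add: sum_distrib_left sum_distrib_right ac_simps)
  also have "\<dots> = (\<Sum>i\<le>N. \<Sum>j\<le>N. of_nat (i choose a) * of_nat (j choose b) * x ^ (i - a) * y ^ (j - b) *
     (of_nat (Suc e) * (\<Sum>k\<le>N. c i j k * of_nat (k choose Suc e) * z ^ (k - Suc e))))"
    by (intro sum.cong refl arg_cong2[where f="(*)"] shift1) (use assms in \<open>auto simp: bnd_Suc\<close>)
  also have "\<dots> = of_nat (Suc e) * BT N c a b (Suc e) p"
    unfolding p BT_def by (simp add: sum_distrib_left sum_distrib_right ac_simps)
  finally show ?thesis .
qed

definition bok :: "nat \<Rightarrow> (nat \<Rightarrow> nat \<Rightarrow> nat \<Rightarrow> complex) \<Rightarrow> nat \<Rightarrow> complex \<times> complex \<times> complex \<Rightarrow> bool" where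
  "bok N c M p \<longleftrightarrow> (\<forall>a b e. a + b + e < M \<longrightarrow> BT N c a b e p = 0)"

lemma bok_dx: "bnd N c \<Longrightarrow> bok N c (Suc M) p \<Longrightarrow> bok N (dx c) M p"
  unfolding bok_def by (auto simp: BT_dx)
lemma bok_dy: "bnd N c \<Longrightarrow> bok N c (Suc M) p \<Longrightarrow> bok N (dy c) M p"
  unfolding bok_def by (cases p) (auto simp: BT_dy)
lemma bok_dz: "bnd N c \<Longrightarrow> bok N c (Suc M) p \<Longrightarrow> bok N (dz c) M p"
  unfolding bok_def by (auto simp: BT_dz)
lemma bok_mono: "bok N c M p \<Longrightarrow> M' \<le> M \<Longrightarrow> bok N c M' p"
  unfolding bok_def by auto

lemma choose_id: "(j choose Suc t) * Suc t = (j - t) * (j choose t)"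
proof (cases j)
  case (Suc j')
  then show ?thesis using Suc_times_binomial_eq[of j' t] binomial_absorb_comp[of j t] by simp
qed simp

lemma jterm:
  fixes v :: complex
  shows "of_nat j * of_nat (j choose t) * v ^ (j - t) =
    of_nat t * of_nat (j choose t) * v ^ (j - t) + of_nat (Suc t) * v * of_nat (j choose Suc t) * v ^ (j - Suc t)"
proof (cases "t < j")
  case True
  have e1: "of_nat (j choose Suc t) * of_nat (Suc t) = (of_nat (j - t) * of_nat (j choose t) :: complex)"
    using choose_id[of j t] by (metis of_nat_mult)
  have e2: "v * v ^ (j - Suc t) = v ^ (j - t)"
    using True by (metis Suc_diff_Suc power_Suc)
  have "of_nat (Suc t) * v * of_nat (j choose Suc t) * v ^ (j - Suc t)
      = (of_nat (j choose Suc t) * of_nat (Suc t)) * (v * v ^ (j - Suc t))" by (simp add: ac_simps)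
  also have "\<dots> = of_nat (j - t) * of_nat (j choose t) * v ^ (j - t)" by (simp only: e1 e2)
  finally have "of_nat (Suc t) * v * of_nat (j choose Suc t) * v ^ (j - Suc t) = of_nat (j - t) * of_nat (j choose t) * v ^ (j - t)" .
  moreover have "(of_nat (j - t) :: complex) = of_nat j - of_nat t" using True by simp
  ultimately show ?thesis by (simp add: algebra_simps)
next
  case False
  then show ?thesis by (cases "t = j") (auto simp: binomial_eq_0)
qed

lemma alg:
  fixes i T j A t u v B k :: complex
  assumes "i = T - j" "j * A = t * A + u * v * B"
  shows "i * (k * A) = k * ((T - t) * A - u * v * B)"
proof -
  have h: "u * v * B = j * A - t * A" using assms(2) by simp
  have "k * ((T - t) * A - u * v * B) = k * ((T - t) * A - (j * A - t * A))" by (simp only: h)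
  also have "\<dots> = (T - j) * (k * A)" by (simp add: algebra_simps)
  finally show ?thesis using assms(1) by (metis mult.commute)
qed

definition K :: "nat \<Rightarrow> (nat \<Rightarrow> nat \<Rightarrow> nat \<Rightarrow> complex) \<Rightarrow> nat \<Rightarrow> nat \<Rightarrow> complex" where
  "K N c i j = (\<Sum>k\<le>N. c i j k)"

definition XK :: "nat \<Rightarrow> (nat \<Rightarrow> nat \<Rightarrow> complex) \<Rightarrow> int \<Rightarrow> nat \<Rightarrow> nat \<Rightarrow> complex \<Rightarrow> complex" where
  "XK N \<kappa> \<tau> s t v = (\<Sum>i\<le>N. \<Sum>j\<le>N. if int (i + j) = int s + \<tau> then \<kappa> i j * of_nat (j choose t) * v ^ (j - t) else 0)"

definition eok :: "nat \<Rightarrow> (nat \<Rightarrow> nat \<Rightarrow> complex) \<Rightarrow> int \<Rightarrow> nat \<Rightarrow> complex \<Rightarrow> bool" where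
  "eok N \<kappa> \<tau> M v \<longleftrightarrow> (\<forall>s t. s + t < M \<longrightarrow> XK N \<kappa> \<tau> s t v = 0)"

lemma K_dx: "K N (dx c) i j = of_nat (Suc i) * K N c (Suc i) j"
  unfolding K_def dx_def by (simp add: sum_distrib_left)
lemma K_dy: "K N (dy c) i j = of_nat (Suc j) * K N c i (Suc j)"
  unfolding K_def dy_def by (simp add: sum_distrib_left)
lemma K_swp: "K N (swp c) i j = K N c j i"
  unfolding K_def swp_def by simp
lemma K_dz:
  assumes "hom n c" "bnd N c"
  shows "K N (dz c) i j = of_int (int n - int (i + j)) * K N c i j"
proof -
  have "K N (dz c) i j = (\<Sum>k\<le>N. (\<lambda>k. of_nat k * c i j k) (Suc k))"
    unfolding K_def dz_def by simp
  also have "\<dots> = (\<Sum>k\<le>N. of_nat k * c i j k)"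
    by (rule sum_shift0) (use assms(2) in \<open>simp_all add: bnd_Suc\<close>)
  also have "\<dots> = (\<Sum>k\<le>N. of_int (int n - int (i + j)) * c i j k)"
  proof (intro sum.cong refl)
    fix k show "of_nat k * c i j k = of_int (int n - int (i + j)) * c i j k"
      using assms(1) unfolding hom_def
      by (cases "c i j k = 0") (auto, metis add_diff_cancel_left' of_int_of_nat_eq of_nat_add add.assoc)
  qed
  finally show ?thesis unfolding K_def by (simp add: sum_distrib_left)
qed
lemma K_p1m: "p1m u c \<Longrightarrow> K N c i j \<noteq> 0 \<Longrightarrow> u \<le> i + j"
  unfolding K_def p1m_def by (meson sum.neutral)

lemma XK_dx:
  assumes "\<And>j. \<kappa> (Suc N) j = 0"
  shows "XK N (\<lambda>i j. of_nat (Suc i) * \<kappa> (Suc i) j) (\<tau> - 1) s t v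
     = (of_int (int s + \<tau>) - of_nat t) * XK N \<kappa> \<tau> s t v - of_nat (Suc t) * v * XK N \<kappa> \<tau> s (Suc t) v"
proof -
  define h where "h i = (\<Sum>j\<le>N. if int (i + j) = int s + \<tau> then \<kappa> i j * of_nat (j choose t) * v ^ (j - t) else 0)" for i
  have "XK N (\<lambda>i j. of_nat (Suc i) * \<kappa> (Suc i) j) (\<tau> - 1) s t v
      = (\<Sum>i\<le>N. of_nat (Suc i) * h (Suc i) * of_nat (i choose 0) * 1 ^ (i - 0))"
    unfolding XK_def h_def by (intro sum.cong refl) (auto simp: sum_distrib_left intro!: sum.cong)
  also have "\<dots> = of_nat (Suc 0) * (\<Sum>i\<le>N. h i * of_nat (i choose Suc 0) * 1 ^ (i - Suc 0))"
    by (rule shift1) (simp add: h_def assms cong: if_cong)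
  also have "\<dots> = (\<Sum>i\<le>N. of_nat i * h i)"
    by (simp add: ac_simps)
  also have "\<dots> = (\<Sum>i\<le>N. \<Sum>j\<le>N. if int (i + j) = int s + \<tau> then of_nat i * (\<kappa> i j * (of_nat (j choose t) * v ^ (j - t))) else 0)"
    unfolding h_def sum_distrib_left by (intro sum.cong refl) (simp add: ac_simps)
  also have "\<dots> = (\<Sum>i\<le>N. \<Sum>j\<le>N. if int (i + j) = int s + \<tau> then
        \<kappa> i j * ((of_int (int s + \<tau>) - of_nat t) * (of_nat (j choose t) * v ^ (j - t))
          - of_nat (Suc t) * v * (of_nat (j choose Suc t) * v ^ (j - Suc t))) else 0)"
  proof (intro sum.cong refl)
    fix i j
    show "(if int (i + j) = int s + \<tau> then of_nat i * (\<kappa> i j * (of_nat (j choose t) * v ^ (j - t))) else 0)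
      = (if int (i + j) = int s + \<tau> then
        \<kappa> i j * ((of_int (int s + \<tau>) - of_nat t) * (of_nat (j choose t) * v ^ (j - t))
          - of_nat (Suc t) * v * (of_nat (j choose Suc t) * v ^ (j - Suc t))) else 0)"
    proof (cases "int (i + j) = int s + \<tau>")
      case True
      then have hi: "(of_nat i :: complex) = of_int (int s + \<tau>) - of_nat j"
        by (metis add_diff_cancel_right' of_int_of_nat_eq of_int_diff of_nat_add)
      have hj: "of_nat j * (of_nat (j choose t) * v ^ (j - t)) = of_nat t * (of_nat (j choose t) * v ^ (j - t)) + of_nat (Suc t) * v * (of_nat (j choose Suc t) * v ^ (j - Suc t))"
        using jterm[of j t v] by (simp add: ac_simps)
      show ?thesis using True alg[OF hi hj, of "\<kappa> i j"] by simp
    qed simp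
  qed
  also have "\<dots> = (of_int (int s + \<tau>) - of_nat t) * XK N \<kappa> \<tau> s t v - of_nat (Suc t) * v * XK N \<kappa> \<tau> s (Suc t) v"
    unfolding XK_def
    by (simp add: sum_distrib_left sum_subtractf[symmetric] if_distrib algebra_simps
        cong: if_cong)
  finally show ?thesis .
qed

lemma XK_dy:
  assumes "\<And>i. \<kappa> i (Suc N) = 0"
  shows "XK N (\<lambda>i j. of_nat (Suc j) * \<kappa> i (Suc j)) (\<tau> - 1) s t v = of_nat (Suc t) * XK N \<kappa> \<tau> s (Suc t) v"
proof -
  define h where "h i j = (if int (i + j) = int s + \<tau> then \<kappa> i j else 0)" for i j
  have "XK N (\<lambda>i j. of_nat (Suc j) * \<kappa> i (Suc j)) (\<tau> - 1) s t v
     = (\<Sum>i\<le>N. \<Sum>j\<le>N. of_nat (Suc j) * h i (Suc j) * of_nat (j choose t) * v ^ (j - t))"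
    unfolding XK_def h_def by (intro sum.cong refl) auto
  also have "\<dots> = (\<Sum>i\<le>N. of_nat (Suc t) * (\<Sum>j\<le>N. h i j * of_nat (j choose Suc t) * v ^ (j - Suc t)))"
    by (intro sum.cong refl shift1) (simp add: assms h_def)
  also have "\<dots> = of_nat (Suc t) * XK N \<kappa> \<tau> s (Suc t) v"
    unfolding XK_def h_def sum_distrib_left by (intro sum.cong refl) auto
  finally show ?thesis .
qed

lemma XK_dz:
  assumes "\<And>i j. \<kappa>' i j = of_int (int n - int (i + j)) * \<kappa> i j"
  shows "XK N \<kappa>' \<tau> s t v = of_int (int n - (int s + \<tau>)) * XK N \<kappa> \<tau> s t v"
  unfolding XK_def sum_distrib_left by (intro sum.cong refl) (auto simp: assms)

lemma XK_raise: "XK N \<kappa> (\<tau> + 1) s t v = XK N \<kappa> \<tau> (Suc s) t v"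
  unfolding XK_def by (intro sum.cong refl) (auto simp: algebra_simps)

lemma XK_lowerS: "XK N \<kappa> (\<tau> - 1) (Suc s) t v = XK N \<kappa> \<tau> s t v"
  unfolding XK_def by (intro sum.cong refl) (auto simp: algebra_simps)

lemma XK_lower0: "(\<And>i j. \<kappa> i j \<noteq> 0 \<Longrightarrow> \<tau> \<le> int (i + j)) \<Longrightarrow> XK N \<kappa> (\<tau> - 1) 0 t v = 0"
  unfolding XK_def by (intro sum.neutral ballI) force

lemma eok_dxK: assumes "\<And>j. \<kappa> (Suc N) j = 0" "eok N \<kappa> \<tau> (Suc M) v"
  shows "eok N (\<lambda>i j. of_nat (Suc i) * \<kappa> (Suc i) j) (\<tau> - 1) M v"
  unfolding eok_def
proof (intro allI impI)
  fix s t assume "s + t < M"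
  then show "XK N (\<lambda>i j. of_nat (Suc i) * \<kappa> (Suc i) j) (\<tau> - 1) s t v = 0"
    unfolding XK_dx[of \<kappa> N, OF assms(1)] using assms(2) unfolding eok_def by simp
qed
lemma eok_dyK: assumes "\<And>i. \<kappa> i (Suc N) = 0" "eok N \<kappa> \<tau> (Suc M) v"
  shows "eok N (\<lambda>i j. of_nat (Suc j) * \<kappa> i (Suc j)) (\<tau> - 1) M v"
  unfolding eok_def
proof (intro allI impI)
  fix s t assume "s + t < M"
  then show "XK N (\<lambda>i j. of_nat (Suc j) * \<kappa> i (Suc j)) (\<tau> - 1) s t v = 0"
    unfolding XK_dy[of \<kappa> N, OF assms(1)] using assms(2) unfolding eok_def by simp
qed
lemma eok_dzK: assumes "\<And>i j. \<kappa>' i j = of_int (int n - int (i + j)) * \<kappa> i j" "eok N \<kappa> \<tau> M v"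
  shows "eok N \<kappa>' \<tau> M v"
  unfolding eok_def
proof (intro allI impI)
  fix s t assume "s + t < M"
  then show "XK N \<kappa>' \<tau> s t v = 0"
    unfolding XK_dz[where n=n, OF assms(1)] using assms(2) unfolding eok_def by simp
qed
lemma eok_raise: "eok N \<kappa> \<tau> (Suc M) v \<Longrightarrow> eok N \<kappa> (\<tau> + 1) M v"
  unfolding eok_def by (simp add: XK_raise)
lemma eok_lower: "(\<And>i j. \<kappa> i j \<noteq> 0 \<Longrightarrow> \<tau> \<le> int (i + j)) \<Longrightarrow> eok N \<kappa> \<tau> M v \<Longrightarrow> eok N \<kappa> (\<tau> - 1) M v"
  unfolding eok_def
proof (intro allI impI)
  fix s t assume h: "\<And>i j. \<kappa> i j \<noteq> 0 \<Longrightarrow> \<tau> \<le> int (i + j)" and e: "\<forall>s t. s + t < M \<longrightarrow> XK N \<kappa> \<tau> s t v = 0"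
    and st: "s + t < M"
  show "XK N \<kappa> (\<tau> - 1) s t v = 0"
  proof (cases s)
    case 0 then show ?thesis using XK_lower0[OF h] by simp
  next
    case (Suc s') then show ?thesis using e st by (simp add: XK_lowerS)
  qed
qed
lemma eok_mono: "eok N \<kappa> \<tau> M v \<Longrightarrow> M' \<le> M \<Longrightarrow> eok N \<kappa> \<tau> M' v"
  unfolding eok_def by auto

definition eok2 :: "nat \<Rightarrow> (nat \<Rightarrow> nat \<Rightarrow> nat \<Rightarrow> complex) \<Rightarrow> int \<Rightarrow> nat \<Rightarrow> complex \<times> complex \<Rightarrow> bool" where
  "eok2 N c \<tau> M ab = (case ab of (a, b) \<Rightarrow>
     if a \<noteq> 0 then eok N (K N c) \<tau> M (b / a) else eok N (K N (swp c)) \<tau> M (a / b))"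

lemma K_bnd: "bnd N c \<Longrightarrow> K N c (Suc N) j = 0" "bnd N c \<Longrightarrow> K N c i (Suc N) = 0"
  unfolding K_def by (simp_all add: bnd_Suc)

lemma K_dx': "K N (dx c) = (\<lambda>i j. of_nat (Suc i) * K N c (Suc i) j)" by (intro ext) (simp add: K_dx)
lemma K_dy': "K N (dy c) = (\<lambda>i j. of_nat (Suc j) * K N c i (Suc j))" by (intro ext) (simp add: K_dy)

lemma eok2_dx: assumes "bnd N c" "eok2 N c \<tau> (Suc M) ab" shows "eok2 N (dx c) (\<tau> - 1) M ab"
proof -
  obtain a b where ab: "ab = (a, b)" by (cases ab) auto
  show ?thesis
  proof (cases "a = 0")
    case True
    have "eok N (K N (dy (swp c))) (\<tau> - 1) M (a / b)" unfolding K_dy'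
      by (rule eok_dyK) (use assms True in \<open>simp_all add: ab eok2_def K_bnd bnd_swp\<close>)
    then show ?thesis by (simp add: eok2_def ab True swp_dx)
  next
    case False
    have "eok N (K N (dx c)) (\<tau> - 1) M (b / a)" unfolding K_dx'
      by (rule eok_dxK) (use assms False in \<open>simp_all add: ab eok2_def K_bnd\<close>)
    then show ?thesis by (simp add: eok2_def ab False)
  qed
qed
lemma eok2_dy: assumes "bnd N c" "eok2 N c \<tau> (Suc M) ab" shows "eok2 N (dy c) (\<tau> - 1) M ab"
proof -
  obtain a b where ab: "ab = (a, b)" by (cases ab) auto
  show ?thesis
  proof (cases "a = 0")
    case True
    have "eok N (K N (dx (swp c))) (\<tau> - 1) M (a / b)" unfolding K_dx'
      by (rule eok_dxK) (use assms True in \<open>simp_all add: ab eok2_def K_bnd bnd_swp\<close>)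
    then show ?thesis by (simp add: eok2_def ab True swp_dy)
  next
    case False
    have "eok N (K N (dy c)) (\<tau> - 1) M (b / a)" unfolding K_dy'
      by (rule eok_dyK) (use assms False in \<open>simp_all add: ab eok2_def K_bnd\<close>)
    then show ?thesis by (simp add: eok2_def ab False)
  qed
qed
lemma eok2_dz: assumes "hom n c" "bnd N c" "eok2 N c \<tau> M ab" shows "eok2 N (dz c) \<tau> M ab"
proof -
  obtain a b where ab: "ab = (a, b)" by (cases ab) auto
  show ?thesis
  proof (cases "a = 0")
    case True
    have "eok N (K N (dz (swp c))) \<tau> M (a / b)"
      by (rule eok_dzK[where n=n]) (use assms True in \<open>simp_all add: ab eok2_def K_dz[OF hom_swp[OF assms(1)] bnd_swp[OF assms(2)]]\<close>)
    then show ?thesis by (simp add: eok2_def ab True swp_dz)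
  next
    case False
    have "eok N (K N (dz c)) \<tau> M (b / a)"
      by (rule eok_dzK[where n=n]) (use assms False in \<open>simp_all add: ab eok2_def K_dz\<close>)
    then show ?thesis by (simp add: eok2_def ab False)
  qed
qed
lemma eok2_raise: "eok2 N c \<tau> (Suc M) ab \<Longrightarrow> eok2 N c (\<tau> + 1) M ab"
  unfolding eok2_def by (auto split: prod.splits intro!: eok_raise)
lemma eok2_lower: assumes "p1m u c" "\<tau> \<le> int u" "eok2 N c \<tau> M ab" shows "eok2 N c (\<tau> - 1) M ab"
proof -
  have h1: "\<tau> \<le> int (i + j)" if "K N c i j \<noteq> 0" for i j
    using K_p1m[OF assms(1) that] assms(2) by linarith
  have h2: "\<tau> \<le> int (i + j)" if "K N (swp c) i j \<noteq> 0" for i j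
    using K_p1m[OF p1m_swp[OF assms(1)] that] assms(2) by linarith
  show ?thesis using assms(3) unfolding eok2_def
    by (auto split: prod.splits intro: eok_lower[OF h1] eok_lower[OF h2])
qed
lemma eok2_mono: "eok2 N c \<tau> M ab \<Longrightarrow> M' \<le> M \<Longrightarrow> eok2 N c \<tau> M' ab"
  unfolding eok2_def by (auto split: prod.splits intro: eok_mono)

lemma sum_bound1:
  fixes f :: "nat \<Rightarrow> complex"
  assumes "N0 \<le> N" "\<And>i. N0 < i \<Longrightarrow> f i = 0"
  shows "(\<Sum>i\<le>N. f i) = (\<Sum>i\<le>N0. f i)"
  by (rule sum.mono_neutral_right) (use assms in auto)

lemma sum3_bound:
  fixes f :: "nat \<Rightarrow> nat \<Rightarrow> nat \<Rightarrow> complex"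
  assumes "N0 \<le> N" "\<And>i j k. f i j k \<noteq> 0 \<Longrightarrow> i \<le> N0 \<and> j \<le> N0 \<and> k \<le> N0"
  shows "(\<Sum>i\<le>N. \<Sum>j\<le>N. \<Sum>k\<le>N. f i j k) = (\<Sum>i\<le>N0. \<Sum>j\<le>N0. \<Sum>k\<le>N0. f i j k)"
proof -
  have e1: "(\<Sum>k\<le>N. f i j k) = (\<Sum>k\<le>N0. f i j k)" for i j
    by (rule sum_bound1) (use assms in force)+
  have e2: "(\<Sum>j\<le>N. \<Sum>k\<le>N0. f i j k) = (\<Sum>j\<le>N0. \<Sum>k\<le>N0. f i j k)" for i
    by (rule sum_bound1) (use assms in \<open>force intro!: sum.neutral\<close>)+
  have e3: "(\<Sum>i\<le>N. \<Sum>j\<le>N0. \<Sum>k\<le>N0. f i j k) = (\<Sum>i\<le>N0. \<Sum>j\<le>N0. \<Sum>k\<le>N0. f i j k)"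
    by (rule sum_bound1) (use assms in \<open>force intro!: sum.neutral\<close>)+
  show ?thesis by (simp add: e1 e2 e3)
qed

lemma BT_bound: "bnd N0 c \<Longrightarrow> N0 \<le> N \<Longrightarrow> BT N c a b e p = BT N0 c a b e p"
  unfolding BT_def by (cases p) (auto intro!: sum3_bound simp: bnd_def)

lemma mult_ge_Base_iff:
  assumes "hom (3 * D) c" "3 * D \<le> N"
  shows "mult_ge D c M (Base p) \<longleftrightarrow> bok N c M p"
proof -
  have "mult_ge D c M (Base p) \<longleftrightarrow> bok (3 * D) c M p"
    by (cases p) (simp add: bok_def BT_def)
  also have "\<dots> \<longleftrightarrow> bok N c M p"
    unfolding bok_def using BT_bound[OF hom_bnd[OF assms(1) order_refl] assms(2)] by simp
  finally show ?thesis .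
qed

lemma XK_K: "XK N (K N c) \<tau> s t v = (\<Sum>i\<le>N. \<Sum>j\<le>N. \<Sum>k\<le>N. if int (i + j) = int s + \<tau> then c i j k * of_nat (j choose t) * v ^ (j - t) else 0)"
  unfolding XK_def K_def by (intro sum.cong refl) (simp add: sum_distrib_right)

lemma XK_Kswp: "XK N (K N (swp c)) \<tau> s t v = (\<Sum>i\<le>N. \<Sum>j\<le>N. \<Sum>k\<le>N. if int (i + j) = int s + \<tau> then c i j k * of_nat (i choose t) * v ^ (i - t) else 0)"
  unfolding XK_K swp_def by (subst sum.swap) (simp add: add.commute)

lemma int_eq4: "(int i + int j = int s + int D) = (i + j = s + D)" by linarith
lemma int_eq5: "(int (i + j) = int s + int D) = (i + j = s + D)" by linarith

lemma mult_ge_Exc_iff: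
  assumes "hom (3 * D) c" "3 * D \<le> N"
  shows "mult_ge D c M (Exc ab) \<longleftrightarrow> eok2 N c (int D) M ab"
proof -
  obtain a b where ab: "ab = (a, b)" by (cases ab) auto
  have bd: "bnd (3 * D) c" using hom_bnd[OF assms(1) order_refl] .
  have X1: "XK N (K N c) (int D) s t v = (\<Sum>i\<le>3*D. \<Sum>j\<le>3*D. \<Sum>k\<le>3*D. if i + j = s + D then c i j k * of_nat (j choose t) * v ^ (j - t) else 0)" for s t v
    unfolding XK_K by (subst sum3_bound[OF assms(2)]) (use bd in \<open>auto simp: bnd_def int_eq4 split: if_splits\<close>)
  have X2: "XK N (K N (swp c)) (int D) s t v = (\<Sum>i\<le>3*D. \<Sum>j\<le>3*D. \<Sum>k\<le>3*D. if i + j = s + D then c i j k * of_nat (i choose t) * v ^ (i - t) else 0)" for s t v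
    unfolding XK_Kswp by (subst sum3_bound[OF assms(2)]) (use bd in \<open>auto simp: bnd_def int_eq4 split: if_splits\<close>)
  show ?thesis unfolding ab eok2_def eok_def by (simp only: mult_ge.simps X1 X2 prod.case)
qed


lemma m4: "m + 4 = Suc (Suc (Suc (Suc m)))" by simp
lemma m3: "m + 3 = Suc (Suc (Suc m))" by simp

lemma p1m_mono: "p1m u c \<Longrightarrow> u' \<le> u \<Longrightarrow> p1m u' c" unfolding p1m_def by force
lemma zb0_p1m: "hom n c \<Longrightarrow> zb 0 c \<Longrightarrow> p1m n c" unfolding hom_def zb_def p1m_def by force
lemma sect_iff: "sect d c \<longleftrightarrow> hom (3 * d) c \<and> p1m d c" unfolding sect_def hom_def p1m_def by blast

lemma transfer:
  assumes d1: "d \<ge> 1" and hG: "hom (3 * (d - 1)) G" and pG: "p1m (d - 1) G" and nz: "G i j k \<noteq> 0"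
    and mF: "\<forall>q\<in>Z. mult_ge d F (m + 4) q" and hF: "hom (3 * d) F"
    and bT: "\<And>p. bok (3 * d) F (m + 4) p \<Longrightarrow> bok (3 * d) G m p"
    and eT: "\<And>ab. eok2 (3 * d) F (int d) (m + 4) ab \<Longrightarrow> eok2 (3 * d) G (int (d - 1)) m ab"
  shows "\<exists>G. sect (d - 1) G \<and> (\<exists>i j k. G i j k \<noteq> 0) \<and> (\<forall>q\<in>Z. mult_ge (d - 1) G m q)"
proof (rule exI[of _ G], intro conjI)
  show "sect (d - 1) G" using hG pG by (simp add: sect_iff)
  show "\<exists>i j k. G i j k \<noteq> 0" using nz by blast
  show "\<forall>q\<in>Z. mult_ge (d - 1) G m q"
  proof
    fix q assume "q \<in> Z"
    then have mq: "mult_ge d F (m + 4) q" using mF by blast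
    have le: "3 * (d - 1) \<le> 3 * d" by simp
    show "mult_ge (d - 1) G m q"
    proof (cases q)
      case (Base p)
      have "mult_ge (d - 1) G m (Base p) \<longleftrightarrow> bok (3 * d) G m p" by (rule mult_ge_Base_iff[OF hG le])
      moreover have "mult_ge d F (m + 4) (Base p) \<longleftrightarrow> bok (3 * d) F (m + 4) p" by (rule mult_ge_Base_iff[OF hF order_refl])
      ultimately show ?thesis using mq bT Base by simp
    next
      case (Exc ab)
      have "mult_ge (d - 1) G m (Exc ab) \<longleftrightarrow> eok2 (3 * d) G (int (d - 1)) m ab" by (rule mult_ge_Exc_iff[OF hG le])
      moreover have "mult_ge d F (m + 4) (Exc ab) \<longleftrightarrow> eok2 (3 * d) F (int d) (m + 4) ab" by (rule mult_ge_Exc_iff[OF hF order_refl])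
      ultimately show ?thesis using mq eT Exc by simp
    qed
  qed
qed

lemma case1:
  assumes d1: "d \<ge> 1" and sF: "sect d F" and mF: "\<forall>q\<in>Z. mult_ge d F (m + 4) q"
    and nz: "F i j k \<noteq> 0" and k3: "k \<ge> 3"
  shows "\<exists>G. sect (d - 1) G \<and> (\<exists>i j k. G i j k \<noteq> 0) \<and> (\<forall>q\<in>Z. mult_ge (d - 1) G m q)"
proof -
  have hF: "hom (3 * d) F" and pF: "p1m d F" using sF by (simp_all add: sect_iff)
  define N where "N = 3 * d"
  have b0: "bnd N F" using hom_bnd[OF hF] by (simp add: N_def)
  have b1: "bnd N (dz F)" using bnd_dz[OF b0] .
  have b2: "bnd N (dz (dz F))" using bnd_dz[OF b1] .
  have h1: "hom (3 * d - 1) (dz F)" using hom_dz[OF hF] .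
  have h2: "hom (3 * d - 1 - 1) (dz (dz F))" using hom_dz[OF h1] .
  have e3: "3 * (d - 1) = 3 * d - 1 - 1 - 1" by simp
  have h3: "hom (3 * (d - 1)) (dz (dz (dz F)))" unfolding e3 by (rule hom_dz[OF h2])
  have p3: "p1m d (dz (dz (dz F)))" using p1m_dz[OF p1m_dz[OF p1m_dz[OF pF]]] .
  obtain k' where k': "k = Suc (Suc (Suc k'))" using k3 by (intro that[of "k - 3"]) arith
  have nz3: "dz (dz (dz F)) i j k' \<noteq> 0" using nz by (simp add: dz_def k' del: of_nat_Suc)
  show ?thesis
  proof (rule transfer[OF d1 h3 p1m_mono[OF p3] nz3 mF hF])
    show "d - 1 \<le> d" by simp
  next
    fix p assume "bok (3 * d) F (m + 4) p"
    then have "bok N F (Suc (Suc (Suc (Suc m)))) p" unfolding N_def m4 .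
    then have "bok N (dz (dz (dz F))) (Suc m) p" using bok_dz b0 b1 b2 by blast
    then show "bok (3 * d) (dz (dz (dz F))) m p" by (auto simp: N_def intro: bok_mono)
  next
    fix ab assume "eok2 (3 * d) F (int d) (m + 4) ab"
    then have "eok2 N F (int d) (m + 4) ab" by (simp add: N_def)
    then have "eok2 N (dz (dz (dz F))) (int d) (m + 4) ab"
      using eok2_dz[OF hF b0] eok2_dz[OF h1 b1] eok2_dz[OF h2 b2] by blast
    then have "eok2 N (dz (dz (dz F))) (int d - 1) (m + 4) ab"
      using eok2_lower[OF p3] by simp
    then show "eok2 (3 * d) (dz (dz (dz F))) (int (d - 1)) m ab"
      using d1 by (auto simp: N_def of_nat_diff intro: eok2_mono)
  qed
qed

definition opxy :: "((nat \<Rightarrow> nat \<Rightarrow> nat \<Rightarrow> complex) \<Rightarrow> nat \<Rightarrow> nat \<Rightarrow> nat \<Rightarrow> complex) \<Rightarrow> bool" where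
  "opxy X \<longleftrightarrow> X = dx \<or> X = dy"

lemma xy_hom: "opxy X \<Longrightarrow> hom n c \<Longrightarrow> hom (n - 1) (X c)" unfolding opxy_def using hom_dx hom_dy by blast
lemma xy_bnd: "opxy X \<Longrightarrow> bnd n c \<Longrightarrow> bnd n (X c)" unfolding opxy_def using bnd_dx bnd_dy by blast
lemma xy_p1m: "opxy X \<Longrightarrow> p1m u c \<Longrightarrow> p1m (u - 1) (X c)" unfolding opxy_def using p1m_dx p1m_dy by blast
lemma xy_zb: "opxy X \<Longrightarrow> zb r c \<Longrightarrow> zb r (X c)" unfolding opxy_def using zb_dx zb_dy by blast
lemma xy_bok: "opxy X \<Longrightarrow> bnd N c \<Longrightarrow> bok N c (Suc M) p \<Longrightarrow> bok N (X c) M p"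
  unfolding opxy_def using bok_dx bok_dy by blast
lemma xy_eok2: "opxy X \<Longrightarrow> bnd N c \<Longrightarrow> eok2 N c \<tau> (Suc M) ab \<Longrightarrow> eok2 N (X c) (\<tau> - 1) M ab"
  unfolding opxy_def using eok2_dx eok2_dy by blast

lemma case2:
  assumes d1: "d \<ge> 1" and sF: "sect d F" and mF: "\<forall>q\<in>Z. mult_ge d F (m + 4) q"
    and X: "opxy X" and nz: "dz (dz (X F)) i j k \<noteq> 0"
  shows "\<exists>G. sect (d - 1) G \<and> (\<exists>i j k. G i j k \<noteq> 0) \<and> (\<forall>q\<in>Z. mult_ge (d - 1) G m q)"
proof -
  have hF: "hom (3 * d) F" and pF: "p1m d F" using sF by (simp_all add: sect_iff)
  define N where "N = 3 * d"
  have b0: "bnd N F" using hom_bnd[OF hF] by (simp add: N_def)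
  have b1: "bnd N (X F)" using xy_bnd[OF X b0] .
  have b2: "bnd N (dz (X F))" using bnd_dz[OF b1] .
  have h1: "hom (3 * d - 1) (X F)" using xy_hom[OF X hF] .
  have h2: "hom (3 * d - 1 - 1) (dz (X F))" using hom_dz[OF h1] .
  have e3: "3 * (d - 1) = 3 * d - 1 - 1 - 1" by simp
  have h3: "hom (3 * (d - 1)) (dz (dz (X F)))" unfolding e3 by (rule hom_dz[OF h2])
  have p3: "p1m (d - 1) (dz (dz (X F)))" using p1m_dz[OF p1m_dz[OF xy_p1m[OF X pF]]] .
  show ?thesis
  proof (rule transfer[OF d1 h3 p3 nz mF hF])
    fix p assume "bok (3 * d) F (m + 4) p"
    then have "bok N F (Suc (Suc (Suc (Suc m)))) p" unfolding N_def m4 .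
    then have "bok N (dz (dz (X F))) (Suc m) p" using xy_bok[OF X] bok_dz b0 b1 b2 by blast
    then show "bok (3 * d) (dz (dz (X F))) m p" by (auto simp: N_def intro: bok_mono)
  next
    fix ab assume "eok2 (3 * d) F (int d) (m + 4) ab"
    moreover have "m + 4 = Suc (m + 3)" by simp
    ultimately have "eok2 N F (int d) (Suc (m + 3)) ab" unfolding N_def by metis
    then have "eok2 N (X F) (int d - 1) (m + 3) ab" using xy_eok2[OF X b0] by blast
    then have "eok2 N (dz (dz (X F))) (int d - 1) (m + 3) ab"
      using eok2_dz[OF h1 b1] eok2_dz[OF h2 b2] by blast
    then show "eok2 (3 * d) (dz (dz (X F))) (int (d - 1)) m ab"
      using d1 by (auto simp: N_def of_nat_diff intro: eok2_mono)
  qed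
qed

lemma case3:
  assumes d1: "d \<ge> 1" and sF: "sect d F" and mF: "\<forall>q\<in>Z. mult_ge d F (m + 4) q"
    and zF: "zb 1 F" and X: "opxy X" and Y: "opxy Y" and nz: "dz (X (Y F)) i j k \<noteq> 0"
  shows "\<exists>G. sect (d - 1) G \<and> (\<exists>i j k. G i j k \<noteq> 0) \<and> (\<forall>q\<in>Z. mult_ge (d - 1) G m q)"
proof -
  have hF: "hom (3 * d) F" and pF: "p1m d F" using sF by (simp_all add: sect_iff)
  define N where "N = 3 * d"
  have b0: "bnd N F" using hom_bnd[OF hF] by (simp add: N_def)
  have b1: "bnd N (Y F)" using xy_bnd[OF Y b0] .
  have b2: "bnd N (X (Y F))" using xy_bnd[OF X b1] .
  have h1: "hom (3 * d - 1) (Y F)" using xy_hom[OF Y hF] .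
  have h2: "hom (3 * d - 1 - 1) (X (Y F))" using xy_hom[OF X h1] .
  have e3: "3 * (d - 1) = 3 * d - 1 - 1 - 1" by simp
  have h3: "hom (3 * (d - 1)) (dz (X (Y F)))" unfolding e3 by (rule hom_dz[OF h2])
  have z3: "zb 0 (dz (X (Y F)))" using zb_dz[of 0 "X (Y F)"] xy_zb[OF X xy_zb[OF Y zF]] by simp
  have p3: "p1m (d - 1) (dz (X (Y F)))" using p1m_mono[OF zb0_p1m[OF h3 z3]] by simp
  show ?thesis
  proof (rule transfer[OF d1 h3 p3 nz mF hF])
    fix p assume "bok (3 * d) F (m + 4) p"
    then have "bok N F (Suc (Suc (Suc (Suc m)))) p" unfolding N_def m4 .
    then have "bok N (dz (X (Y F))) (Suc m) p" using xy_bok[OF X] xy_bok[OF Y] bok_dz b0 b1 b2 by blast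
    then show "bok (3 * d) (dz (X (Y F))) m p" by (auto simp: N_def intro: bok_mono)
  next
    fix ab assume "eok2 (3 * d) F (int d) (m + 4) ab"
    then have "eok2 N F (int d) (Suc (Suc (Suc (Suc m)))) ab" unfolding N_def m4 .
    then have "eok2 N (Y F) (int d - 1) (Suc (Suc (Suc m))) ab" using xy_eok2[OF Y b0] by blast
    then have "eok2 N (X (Y F)) (int d - 1 - 1) (Suc (Suc m)) ab" using xy_eok2[OF X b1] by blast
    then have "eok2 N (dz (X (Y F))) (int d - 1 - 1) (Suc (Suc m)) ab" using eok2_dz[OF h2 b2] by blast
    then have "eok2 N (dz (X (Y F))) (int d - 1 - 1 + 1) (Suc m) ab" using eok2_raise by blast
    then show "eok2 (3 * d) (dz (X (Y F))) (int (d - 1)) m ab"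
      using d1 by (auto simp: N_def of_nat_diff intro: eok2_mono)
  qed
qed


lemma nonbin:
  assumes d1: "d \<ge> 1" and sF: "sect d F" and mF: "\<forall>q\<in>Z. mult_ge d F (m + 4) q"
    and nb: "\<exists>i j k. F i j k \<noteq> 0 \<and> k \<noteq> 0"
  shows "\<exists>G. sect (d - 1) G \<and> (\<exists>i j k. G i j k \<noteq> 0) \<and> (\<forall>q\<in>Z. mult_ge (d - 1) G m q)"
proof -
  have hF: "hom (3 * d) F" using sF by (simp add: sect_iff)
  have ox: "opxy dx" and oy: "opxy dy" by (simp_all add: opxy_def)
  show ?thesis
  proof (cases "\<exists>i j k. F i j k \<noteq> 0 \<and> k \<ge> 3")
    case True
    then obtain i j k where "F i j k \<noteq> 0" "k \<ge> 3" by blast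
    then show ?thesis using case1[OF d1 sF mF] by blast
  next
    case n3: False
    show ?thesis
    proof (cases "\<exists>i j. F i j 2 \<noteq> 0")
      case True
      then obtain i j where nz: "F i j 2 \<noteq> 0" by blast
      then have "i + j + 2 = 3 * d" using hF unfolding hom_def by blast
      then have ij: "i \<ge> 1 \<or> j \<ge> 1" using d1 by linarith
      show ?thesis
      proof (cases "i \<ge> 1")
        case True
        then obtain i' where i': "i = Suc i'" by (intro that[of "i - 1"]) arith
        have "dz (dz (dx F)) i' j 0 \<noteq> 0" using nz by (simp add: dz_def dx_def i' numeral_2_eq_2 del: of_nat_Suc)
        then show ?thesis using case2[OF d1 sF mF ox] by blast
      next
        case False
        then have "j \<ge> 1" using ij by simp
        then obtain j' where j': "j = Suc j'" by (intro that[of "j - 1"]) arith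
        have "dz (dz (dy F)) i j' 0 \<noteq> 0" using nz by (simp add: dz_def dy_def j' numeral_2_eq_2 del: of_nat_Suc)
        then show ?thesis using case2[OF d1 sF mF oy] by blast
      qed
    next
      case n2: False
      have zF: "zb 1 F" unfolding zb_def
      proof (intro allI impI)
        fix i j k assume "F i j k \<noteq> 0"
        moreover have "k < 3" using n3 \<open>F i j k \<noteq> 0\<close> by (meson not_le)
        moreover have "k \<noteq> 2" using n2 \<open>F i j k \<noteq> 0\<close> by blast
        ultimately show "k \<le> 1" by linarith
      qed
      obtain i j k where nz0: "F i j k \<noteq> 0" "k \<noteq> 0" using nb by blast
      then have "k = 1" using zF unfolding zb_def by force
      then have nz: "F i j 1 \<noteq> 0" using nz0 by simp
      then have "i + j + 1 = 3 * d" using hF unfolding hom_def by blast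
      then have ij: "i + j \<ge> 2" using d1 by linarith
      show ?thesis
      proof (cases "i \<ge> 2")
        case True
        then obtain i' where i': "i = Suc (Suc i')" by (intro that[of "i - 2"]) arith
        have "dz (dx (dx F)) i' j 0 \<noteq> 0" using nz by (simp add: dz_def dx_def i' numeral_2_eq_2 del: of_nat_Suc)
        then show ?thesis using case3[OF d1 sF mF zF ox ox] by blast
      next
        case i2: False
        show ?thesis
        proof (cases "i = 1")
          case True
          then obtain j' where j': "j = Suc j'" using ij by (intro that[of "j - 1"]) arith
          have "dz (dx (dy F)) 0 j' 0 \<noteq> 0" using nz by (simp add: dz_def dx_def dy_def True j' numeral_2_eq_2 del: of_nat_Suc)
          then show ?thesis using case3[OF d1 sF mF zF ox oy] by blast
        next
          case False
          then have "i = 0" using i2 by simp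
          then have "j \<ge> 2" using ij by simp
          then obtain j' where j': "j = Suc (Suc j')" by (intro that[of "j - 2"]) arith
          have "dz (dy (dy F)) i j' 0 \<noteq> 0" using nz by (simp add: dz_def dy_def j' numeral_2_eq_2 del: of_nat_Suc)
          then show ?thesis using case3[OF d1 sF mF zF oy oy] by blast
        qed
      qed
    qed
  qed
qed


definition binf :: "nat \<Rightarrow> complex poly \<Rightarrow> nat \<Rightarrow> nat \<Rightarrow> nat \<Rightarrow> complex" where
  "binf n g i j k = (if k = 0 \<and> i + j = n then coeff g j else 0)"

definition Tay :: "complex poly \<Rightarrow> complex \<Rightarrow> nat \<Rightarrow> complex" where
  "Tay g v t = coeff (pcompose g [:v, 1:]) t"

lemma pc_pow: "pcompose (p ^ r) q = (pcompose p q) ^ r"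
  by (induction r) (simp_all add: pcompose_mult pcompose_1)

lemma pc_x: "pcompose [:0, 1:] q = (q :: complex poly)"
  by (simp add: pcompose_pCons)

lemma Tay_sum:
  assumes "degree g \<le> n"
  shows "Tay g v t = (\<Sum>j\<le>n. coeff g j * of_nat (j choose t) * v ^ (j - t))"
proof -
  have "pcompose g [:v, 1:] = pcompose (\<Sum>j\<le>n. monom (coeff g j) j) [:v, 1:]"
    by (simp add: poly_as_sum_of_monoms'[OF assms])
  also have "\<dots> = (\<Sum>j\<le>n. smult (coeff g j) ([:v, 1:] ^ j))"
    by (simp add: pcompose_sum monom_altdef pcompose_smult pc_pow pc_x)
  finally have "Tay g v t = (\<Sum>j\<le>n. coeff g j * coeff ([:v, 1:] ^ j) t)"
    by (simp add: Tay_def coeff_sum)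
  also have "\<dots> = (\<Sum>j\<le>n. coeff g j * of_nat (j choose t) * v ^ (j - t))"
  proof (intro sum.cong refl)
    fix j show "coeff g j * coeff ([:v, 1:] ^ j) t = coeff g j * of_nat (j choose t) * v ^ (j - t)"
    proof (cases "t \<le> j")
      case True then show ?thesis by (simp add: coeff_linear_poly_power)
    next
      case False
      then have "coeff ([:v, 1:] ^ j) t = 0"
        by (intro coeff_eq_0) (simp add: degree_linear_power)
      then show ?thesis using False by (simp add: binomial_eq_0)
    qed
  qed
  finally show ?thesis .
qed

lemma pc_dvd: "p dvd r \<Longrightarrow> pcompose p q dvd pcompose r q"
  by (auto simp: pcompose_mult elim!: dvdE)

lemma lin_pc1: "pcompose [:-v, 1:] [:v, 1:] = ([:0, 1:] :: complex poly)"
  by (simp add: pcompose_pCons)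
lemma lin_pc2: "pcompose [:v, 1:] [:-v, 1:] = ([:0, 1:] :: complex poly)"
  by (simp add: pcompose_pCons)

lemma Tay_dvd: "[:-v, 1:] ^ r dvd g \<longleftrightarrow> (\<forall>t<r. Tay g v t = 0)"
proof -
  have m: "monom 1 r = [:0, 1:] ^ r" by (simp add: monom_altdef)
  have "[:-v, 1:] ^ r dvd g \<longleftrightarrow> monom 1 r dvd pcompose g [:v, 1:]"
  proof
    assume "[:-v, 1:] ^ r dvd g"
    from pc_dvd[OF this, of "[:v, 1:]"] show "monom 1 r dvd pcompose g [:v, 1:]"
      by (simp add: pc_pow lin_pc1 m)
  next
    assume "monom 1 r dvd pcompose g [:v, 1:]"
    from pc_dvd[OF this, of "[:-v, 1:]"] show "[:-v, 1:] ^ r dvd g"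
      by (simp add: pc_pow lin_pc2 m pcompose_assoc[symmetric] pc_x)
  qed
  also have "\<dots> \<longleftrightarrow> (\<forall>t<r. Tay g v t = 0)"
    by (simp add: monom_1_dvd_iff' Tay_def)
  finally show ?thesis .
qed

lemma sum_single:
  fixes f :: "nat \<Rightarrow> complex"
  shows "(\<Sum>i\<le>N. if i + j = n then f i else 0) = (if j \<le> n \<and> n - j \<le> N then f (n - j) else 0)"
proof (cases "j \<le> n \<and> n - j \<le> N")
  case True
  have "(\<Sum>i\<le>N. if i + j = n then f i else 0) = (\<Sum>i\<le>N. if i = n - j then f i else 0)"
    using True by (intro sum.cong refl) auto
  also have "\<dots> = f (n - j)" using True by (simp add: sum.delta')
  finally show ?thesis using True by simp
next
  case False
  then show ?thesis by (auto intro!: sum.neutral)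
qed

lemma sum_le_cut:
  fixes X :: "nat \<Rightarrow> complex"
  assumes "n \<le> N"
  shows "(\<Sum>j\<le>N. if j \<le> n \<and> n - j \<le> N then X j else 0) = (\<Sum>j\<le>n. X j)"
proof -
  have "(\<Sum>j\<le>N. if j \<le> n \<and> n - j \<le> N then X j else 0) = (\<Sum>j\<le>N. if j \<in> {..n} then X j else 0)"
    using assms by (intro sum.cong refl) auto
  also have "\<dots> = (\<Sum>j\<le>n. X j)"
    by (rule sum.mono_neutral_cong_right) (use assms in auto)
  finally show ?thesis .
qed

lemma hom_binf: "hom n (binf n g)" unfolding hom_def binf_def by auto

lemma K_binf: "n \<le> N \<Longrightarrow> K N (binf n g) i j = (if i + j = n then coeff g j else 0)"
  unfolding K_def binf_def
proof -
  have "(\<Sum>k\<le>N. if k = 0 \<and> i + j = n then coeff g j else 0) = (\<Sum>k\<le>N. if k = 0 then (if i + j = n then coeff g j else 0) else 0)"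
    by (intro sum.cong refl) auto
  then show "(\<Sum>k\<le>N. if k = 0 \<and> i + j = n then coeff g j else 0) = (if i + j = n then coeff g j else 0)"
    by (simp add: sum.delta)
qed

lemma XK_binf:
  assumes "n \<le> N"
  shows "XK N (K N (binf n g)) \<tau> s t v = (if int n = int s + \<tau> then (\<Sum>j\<le>n. coeff g j * of_nat (j choose t) * v ^ (j - t)) else 0)"
proof -
  define X where "X j = (if int n = int s + \<tau> then coeff g j * of_nat (j choose t) * v ^ (j - t) else 0)" for j
  have "XK N (K N (binf n g)) \<tau> s t v = (\<Sum>i\<le>N. \<Sum>j\<le>N. if i + j = n then X j else 0)"
    unfolding XK_def K_binf[OF assms] X_def by (intro sum.cong refl) auto
  also have "\<dots> = (\<Sum>j\<le>N. \<Sum>i\<le>N. if i + j = n then X j else 0)" by (rule sum.swap)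
  also have "\<dots> = (\<Sum>j\<le>N. if j \<le> n \<and> n - j \<le> N then X j else 0)" by (simp only: sum_single)
  also have "\<dots> = (\<Sum>j\<le>n. X j)" by (rule sum_le_cut[OF assms])
  finally show ?thesis by (simp add: X_def)
qed

lemma XK_binf_swp:
  assumes "n \<le> N"
  shows "XK N (K N (swp (binf n g))) \<tau> s t 0 = (if int n = int s + \<tau> \<and> t \<le> n then coeff g (n - t) else 0)"
proof -
  define X where "X i = (if int n = int s + \<tau> then coeff g i * of_nat ((n - i) choose t) * 0 ^ ((n - i) - t) else 0)" for i
  have "XK N (K N (swp (binf n g))) \<tau> s t 0 = (\<Sum>i\<le>N. \<Sum>j\<le>N. if j + i = n then X i else 0)"
    unfolding XK_def K_swp K_binf[OF assms] X_def by (intro sum.cong refl) auto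
  also have "\<dots> = (\<Sum>i\<le>N. if i \<le> n \<and> n - i \<le> N then X i else 0)" by (simp only: sum_single)
  also have "\<dots> = (\<Sum>i\<le>n. X i)" by (rule sum_le_cut[OF assms])
  also have "\<dots> = (\<Sum>i\<le>n. if i = n - t then (if int n = int s + \<tau> \<and> t \<le> n then coeff g i else 0) else 0)"
  proof (intro sum.cong refl)
    fix i assume "i \<in> {..n}"
    then show "X i = (if i = n - t then (if int n = int s + \<tau> \<and> t \<le> n then coeff g i else 0) else 0)"
      unfolding X_def by (cases "n - i < t") (auto simp: binomial_eq_0)
  qed
  also have "\<dots> = (if int n = int s + \<tau> \<and> t \<le> n then coeff g (n - t) else 0)"
    by (simp add: sum.delta)
  finally show ?thesis .
qed

lemma BT_binf:
  assumes "n \<le> N"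
  shows "BT N (binf n g) a b e (x, y, z) = (if e = 0 then (\<Sum>j\<le>n. coeff g j * of_nat ((n - j) choose a) * of_nat (j choose b) * x ^ (n - j - a) * y ^ (j - b)) else 0)"
proof -
  define Y where "Y i j = (if e = 0 then coeff g j * of_nat (i choose a) * of_nat (j choose b) * x ^ (i - a) * y ^ (j - b) else 0)" for i j
  have inner: "(\<Sum>k\<le>N. binf n g i j k * of_nat (i choose a) * of_nat (j choose b) * of_nat (k choose e) * x ^ (i - a) * y ^ (j - b) * z ^ (k - e))
      = (if i + j = n then Y i j else 0)" for i j
  proof -
    have "(\<Sum>k\<le>N. binf n g i j k * of_nat (i choose a) * of_nat (j choose b) * of_nat (k choose e) * x ^ (i - a) * y ^ (j - b) * z ^ (k - e))
      = (\<Sum>k\<le>N. if k = 0 then (if i + j = n then Y i j else 0) else 0)"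
      unfolding binf_def Y_def by (intro sum.cong refl) auto
    then show ?thesis by (simp add: sum.delta)
  qed
  have "BT N (binf n g) a b e (x, y, z) = (\<Sum>i\<le>N. \<Sum>j\<le>N. if i + j = n then Y i j else 0)"
    unfolding BT_def by (simp add: inner)
  also have "\<dots> = (\<Sum>j\<le>N. \<Sum>i\<le>N. if i + j = n then Y i j else 0)" by (rule sum.swap)
  also have "\<dots> = (\<Sum>j\<le>N. if j \<le> n \<and> n - j \<le> N then Y (n - j) j else 0)" by (simp only: sum_single)
  also have "\<dots> = (\<Sum>j\<le>n. Y (n - j) j)" by (rule sum_le_cut[OF assms])
  finally show ?thesis by (simp add: Y_def)
qed

lemma BB0:
  fixes g :: "complex poly"
  shows "(\<Sum>j\<le>n. coeff g j * of_nat ((n - j) choose a) * of_nat (j choose b) * 0 ^ (n - j - a) * 1 ^ (j - b))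
   = (if a \<le> n then coeff g (n - a) * of_nat ((n - a) choose b) else 0)"
proof -
  have "(\<Sum>j\<le>n. coeff g j * of_nat ((n - j) choose a) * of_nat (j choose b) * 0 ^ (n - j - a) * 1 ^ (j - b))
     = (\<Sum>j\<le>n. if j = n - a then (if a \<le> n then coeff g j * of_nat (j choose b) else 0) else 0)"
  proof (intro sum.cong refl)
    fix j assume j: "j \<in> {..n}"
    show "coeff g j * of_nat ((n - j) choose a) * of_nat (j choose b) * 0 ^ (n - j - a) * 1 ^ (j - b)
        = (if j = n - a then (if a \<le> n then coeff g j * of_nat (j choose b) else 0) else 0)"
    proof (cases "n - j = a")
      case True then show ?thesis using j by auto
    next
      case False
      then have "n - j < a \<or> n - j > a" by linarith
      then show ?thesis
      proof
        assume lt: "n - j < a"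
        then have z: "(of_nat ((n - j) choose a) :: complex) = 0" by (simp add: binomial_eq_0)
        have "\<not> (j = n - a \<and> a \<le> n)" using j lt by auto
        then show ?thesis unfolding z by auto
      next
        assume gt: "n - j > a"
        then have "0 < n - j - a" by simp
        then have z: "(0::complex) ^ (n - j - a) = 0" by simp
        have jna: "j \<noteq> n - a" using False j gt by auto
        show ?thesis unfolding z by (simp add: jna)
      qed
    qed
  qed
  also have "\<dots> = (if a \<le> n then coeff g (n - a) * of_nat ((n - a) choose b) else 0)"
    by (simp add: sum.delta)
  finally show ?thesis .
qed

lemma alg2:
  fixes sa sb c A A' B B2 I J a b n :: complex
  assumes h1: "sa * A' = (I - a) * A" and h2: "sb * B2 = (J - b) * B" and hn: "I + J = n"
  shows "sa * (c * A' * B) + sb * (c * A * B2) = (n - a - b) * (c * A * B)"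
proof -
  have e1: "sa * (c * A' * B) = c * B * (sa * A')" by (simp add: ac_simps)
  have e2: "sb * (c * A * B2) = c * A * (sb * B2)" by (simp add: ac_simps)
  show ?thesis unfolding e1 e2 h1 h2 hn[symmetric] by (simp add: algebra_simps)
qed

definition EE :: "complex poly \<Rightarrow> nat \<Rightarrow> complex \<Rightarrow> nat \<Rightarrow> nat \<Rightarrow> complex" where
  "EE g n y a b = (\<Sum>j\<le>n. coeff g j * (of_nat ((n - j) choose a) * (of_nat (j choose b) * y ^ (j - b))))"

lemma eul:
  "of_nat (Suc a) * EE g n y (Suc a) b + of_nat (Suc b) * y * EE g n y a (Suc b) = (of_nat n - of_nat a - of_nat b) * EE g n y a b"
proof -
  have t: "of_nat (Suc a) * (coeff g j * (of_nat ((n - j) choose Suc a) * (of_nat (j choose b) * y ^ (j - b))))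
     + of_nat (Suc b) * y * (coeff g j * (of_nat ((n - j) choose a) * (of_nat (j choose Suc b) * y ^ (j - Suc b))))
     = (of_nat n - of_nat a - of_nat b) * (coeff g j * (of_nat ((n - j) choose a) * (of_nat (j choose b) * y ^ (j - b))))"
    if j: "j \<le> n" for j
  proof -
    have h1: "of_nat (Suc a) * of_nat ((n - j) choose Suc a) = (of_nat (n - j) - of_nat a) * (of_nat ((n - j) choose a) :: complex)"
    proof (cases "a \<le> n - j")
      case True
      have "((n - j) choose Suc a) * Suc a = (n - j - a) * ((n - j) choose a)" by (rule choose_id)
      then have e: "(of_nat ((n - j) choose Suc a) * of_nat (Suc a) :: complex) = of_nat (n - j - a) * of_nat ((n - j) choose a)"
        by (metis of_nat_mult)
      have d: "(of_nat (n - j - a) :: complex) = of_nat (n - j) - of_nat a" using True by (rule of_nat_diff)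
      show ?thesis by (metis e d mult.commute)
    next
      case False then show ?thesis by (simp add: binomial_eq_0)
    qed
    have h2: "of_nat (Suc b) * (y * of_nat (j choose Suc b) * y ^ (j - Suc b)) = (of_nat j - of_nat b) * (of_nat (j choose b) * y ^ (j - b))"
      using jterm[of j b y] by (simp add: algebra_simps)
    have hn: "of_nat (n - j) + of_nat j = (of_nat n :: complex)" using j by (simp add: of_nat_diff)
    have "of_nat (Suc a) * (coeff g j * of_nat ((n - j) choose Suc a) * (of_nat (j choose b) * y ^ (j - b)))
     + of_nat (Suc b) * (coeff g j * of_nat ((n - j) choose a) * (y * of_nat (j choose Suc b) * y ^ (j - Suc b)))
     = (of_nat n - of_nat a - of_nat b) * (coeff g j * of_nat ((n - j) choose a) * (of_nat (j choose b) * y ^ (j - b)))"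
      by (rule alg2[OF h1 h2 hn])
    then show ?thesis by (simp add: ac_simps)
  qed
  show ?thesis unfolding EE_def sum_distrib_left sum.distrib[symmetric]
    apply (intro sum.cong refl)
    apply (rule t)
    apply simp
    done
qed

lemma EE_zero:
  assumes "\<forall>t<M. EE g n y 0 t = 0"
  shows "a + b < M \<Longrightarrow> EE g n y a b = 0"
proof (induction a arbitrary: b)
  case 0 then show ?case using assms by simp
next
  case (Suc a)
  have "EE g n y a b = 0" "EE g n y a (Suc b) = 0" using Suc by auto
  then have "of_nat (Suc a) * EE g n y (Suc a) b = 0" using eul[of a g n y b] by simp
  then show ?case by (simp del: of_nat_Suc)
qed


definition dir :: "s1pt \<Rightarrow> complex option" where
  "dir q = (case q of Base (x, y, z) \<Rightarrow> if x \<noteq> 0 then Some (y / x) else None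
                    | Exc (a, b) \<Rightarrow> if a \<noteq> 0 then Some (b / a) else None)"
definition ordq :: "nat \<Rightarrow> nat \<Rightarrow> s1pt \<Rightarrow> nat" where
  "ordq D M q = (case q of Base _ \<Rightarrow> M | Exc _ \<Rightarrow> M - 2 * D)"
definition pcond :: "nat \<Rightarrow> complex poly \<Rightarrow> nat \<Rightarrow> s1pt \<Rightarrow> bool" where
  "pcond D g M q = (case dir q of Some v \<Rightarrow> [:-v, 1:] ^ ordq D M q dvd g | None \<Rightarrow> degree g + ordq D M q \<le> 3 * D)"

lemma deg_iff:
  fixes g :: "complex poly"
  assumes "g \<noteq> 0" "degree g \<le> n"
  shows "(\<forall>a<E. a \<le> n \<longrightarrow> coeff g (n - a) = 0) \<longleftrightarrow> degree g + E \<le> n"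
proof
  assume h: "\<forall>a<E. a \<le> n \<longrightarrow> coeff g (n - a) = 0"
  show "degree g + E \<le> n"
  proof (rule ccontr)
    assume "\<not> degree g + E \<le> n"
    then have "n - degree g < E" using assms(2) by arith
    then have "coeff g (n - (n - degree g)) = 0" using h by auto
    then have "coeff g (degree g) = 0" using assms(2) by simp
    then show False using assms(1) by simp
  qed
next
  assume "degree g + E \<le> n"
  then show "\<forall>a<E. a \<le> n \<longrightarrow> coeff g (n - a) = 0"
    by (auto intro!: coeff_eq_0)
qed

lemma e0_iff: "(\<forall>a b e. a + b + e < (M::nat) \<longrightarrow> (if e = 0 then S a b else (0::complex)) = 0) \<longleftrightarrow> (\<forall>a b. a + b < M \<longrightarrow> S a b = 0)"
proof
  assume h: "\<forall>a b e. a + b + e < M \<longrightarrow> (if e = 0 then S a b else (0::complex)) = 0"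
  show "\<forall>a b. a + b < M \<longrightarrow> S a b = 0"
  proof (intro allI impI)
    fix a b assume "a + b < M"
    then have "a + b + 0 < M" by simp
    then show "S a b = 0" using h by fastforce
  qed
qed auto

lemma if_and: "(if P \<and> Q then x else 0) = (if P then (if Q then x else 0) else 0)" by simp

lemma q_iff:
  fixes X :: "nat \<Rightarrow> complex"
  shows "(\<forall>s t. s + t < M \<longrightarrow> (if int (3 * D) = int s + int D then X t else 0) = 0) \<longleftrightarrow> (\<forall>t < M - 2 * D. X t = 0)"
proof
  assume h: "\<forall>s t. s + t < M \<longrightarrow> (if int (3 * D) = int s + int D then X t else 0) = 0"
  show "\<forall>t < M - 2 * D. X t = 0"
  proof (intro allI impI)
    fix t assume "t < M - 2 * D"
    then have "2 * D + t < M" by arith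
    then have "(if int (3 * D) = int (2 * D) + int D then X t else 0) = 0" using h by blast
    then show "X t = 0" by simp
  qed
next
  assume h: "\<forall>t < M - 2 * D. X t = 0"
  show "\<forall>s t. s + t < M \<longrightarrow> (if int (3 * D) = int s + int D then X t else 0) = 0"
  proof (intro allI impI)
    fix s t assume st: "s + t < M"
    show "(if int (3 * D) = int s + int D then X t else 0) = 0"
    proof (cases "int (3 * D) = int s + int D")
      case True
      then have "s = 2 * D" by linarith
      then have "t < M - 2 * D" using st by arith
      then show ?thesis using h True by simp
    qed simp
  qed
qed

lemma b0_iff:
  fixes c :: "nat \<Rightarrow> complex"
  shows "(\<forall>a b. a + b < M \<longrightarrow> (if a \<le> n then c (n - a) * of_nat ((n - a) choose b) else 0) = 0) \<longleftrightarrow> (\<forall>a<M. a \<le> n \<longrightarrow> c (n - a) = 0)"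
proof
  assume h: "\<forall>a b. a + b < M \<longrightarrow> (if a \<le> n then c (n - a) * of_nat ((n - a) choose b) else 0) = 0"
  show "\<forall>a<M. a \<le> n \<longrightarrow> c (n - a) = 0"
  proof (intro allI impI)
    fix a assume "a < M" "a \<le> n"
    then have "a + 0 < M" by simp
    then have "(if a \<le> n then c (n - a) * of_nat ((n - a) choose 0) else 0) = 0" using h by blast
    then show "c (n - a) = 0" using \<open>a \<le> n\<close> by simp
  qed
next
  assume h: "\<forall>a<M. a \<le> n \<longrightarrow> c (n - a) = 0"
  then show "\<forall>a b. a + b < M \<longrightarrow> (if a \<le> n then c (n - a) * of_nat ((n - a) choose b) else 0) = 0"
    by auto
qed

lemma bin_iff:
  assumes v: "valid_pt q" and g0: "g \<noteq> 0" and dg: "degree g \<le> 3 * D"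
  shows "mult_ge D (binf (3 * D) g) M q \<longleftrightarrow> pcond D g M q"
proof -
  define n where "n = 3 * D"
  have hb: "hom (3 * D) (binf (3 * D) g)" by (rule hom_binf)
  show ?thesis
  proof (cases q)
    case (Base p)
    obtain x y z where p: "p = (x, y, z)" by (cases p) auto
    have xy: "x = 1 \<or> (x = 0 \<and> y = 1)" using v unfolding Base p by (auto simp: normP2_def)
    have "mult_ge D (binf (3 * D) g) M q \<longleftrightarrow> bok n (binf n g) M (x, y, z)"
      unfolding Base p n_def by (rule mult_ge_Base_iff[OF hb order_refl])
    also have "\<dots> \<longleftrightarrow> (\<forall>a b. a + b < M \<longrightarrow> (\<Sum>j\<le>n. coeff g j * of_nat ((n - j) choose a) * of_nat (j choose b) * x ^ (n - j - a) * y ^ (j - b)) = 0)"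
      unfolding bok_def BT_binf[OF order_refl] by (rule e0_iff)
    also have "\<dots> \<longleftrightarrow> pcond D g M q"
    proof (cases "x = 1")
      case True
      have S: "(\<Sum>j\<le>n. coeff g j * of_nat ((n - j) choose a) * of_nat (j choose b) * x ^ (n - j - a) * y ^ (j - b)) = EE g n y a b" for a b
        unfolding EE_def True by (simp add: ac_simps)
      have T: "EE g n y 0 t = Tay g y t" for t
        unfolding EE_def Tay_sum[OF dg[folded n_def]] by (simp add: ac_simps)
      have "(\<forall>a b. a + b < M \<longrightarrow> EE g n y a b = 0) \<longleftrightarrow> (\<forall>t<M. EE g n y 0 t = 0)"
        using EE_zero[of M g n y] by auto
      also have "\<dots> \<longleftrightarrow> [:-y, 1:] ^ M dvd g" by (simp add: T Tay_dvd)
      finally show ?thesis unfolding S using True by (simp add: pcond_def dir_def Base p ordq_def)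
    next
      case False
      then have x0: "x = 0" "y = 1" using xy by auto
      have "(\<forall>a b. a + b < M \<longrightarrow> (\<Sum>j\<le>n. coeff g j * of_nat ((n - j) choose a) * of_nat (j choose b) * x ^ (n - j - a) * y ^ (j - b)) = 0)
         \<longleftrightarrow> (\<forall>a b. a + b < M \<longrightarrow> (if a \<le> n then coeff g (n - a) * of_nat ((n - a) choose b) else 0) = 0)"
        unfolding x0 BB0 by simp
      also have "\<dots> \<longleftrightarrow> (\<forall>a<M. a \<le> n \<longrightarrow> coeff g (n - a) = 0)"
        by (rule b0_iff)
      also have "\<dots> \<longleftrightarrow> degree g + M \<le> n" by (rule deg_iff[OF g0 dg[folded n_def]])
      finally show ?thesis using x0 by (simp add: pcond_def dir_def Base p ordq_def n_def)
    qed
    finally show ?thesis .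
  next
    case (Exc ab)
    obtain a b where ab: "ab = (a, b)" by (cases ab) auto
    have ab1: "a = 1 \<or> (a = 0 \<and> b = 1)" using v unfolding Exc ab by (auto simp: normP1_def)
    have "mult_ge D (binf (3 * D) g) M q \<longleftrightarrow> eok2 n (binf n g) (int D) M (a, b)"
      unfolding Exc ab n_def by (rule mult_ge_Exc_iff[OF hb order_refl])
    also have "\<dots> \<longleftrightarrow> pcond D g M q"
    proof (cases "a = 1")
      case True
      have "eok2 n (binf n g) (int D) M (a, b) \<longleftrightarrow> (\<forall>s t. s + t < M \<longrightarrow> (if int n = int s + int D then Tay g b t else 0) = 0)"
        unfolding eok2_def eok_def XK_binf[OF order_refl] Tay_sum[OF dg[folded n_def]] using True by simp
      also have "\<dots> \<longleftrightarrow> (\<forall>t < M - 2 * D. Tay g b t = 0)"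
        unfolding n_def by (rule q_iff)
      also have "\<dots> \<longleftrightarrow> pcond D g M q" by (simp add: Tay_dvd pcond_def dir_def Exc ab True ordq_def)
      finally show ?thesis .
    next
      case False
      then have a0: "a = 0" "b = 1" using ab1 by auto
      have "eok2 n (binf n g) (int D) M (a, b) \<longleftrightarrow> (\<forall>s t. s + t < M \<longrightarrow> (if int n = int s + int D \<and> t \<le> n then coeff g (n - t) else 0) = 0)"
        unfolding eok2_def eok_def using a0 XK_binf_swp[OF order_refl, of n g] by simp
      also have "\<dots> \<longleftrightarrow> (\<forall>s t. s + t < M \<longrightarrow> (if int (3 * D) = int s + int D then (if t \<le> n then coeff g (n - t) else 0) else 0) = 0)"
        by (simp only: n_def if_and)
      also have "\<dots> \<longleftrightarrow> (\<forall>t < M - 2 * D. (if t \<le> n then coeff g (n - t) else 0) = 0)"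
        by (rule q_iff)
      also have "\<dots> \<longleftrightarrow> (\<forall>t < M - 2 * D. t \<le> n \<longrightarrow> coeff g (n - t) = 0)"
        by auto
      also have "\<dots> \<longleftrightarrow> degree g + (M - 2 * D) \<le> n" by (rule deg_iff[OF g0 dg[folded n_def]])
      also have "\<dots> \<longleftrightarrow> pcond D g M q" by (simp add: pcond_def dir_def Exc ab a0 ordq_def n_def)
      finally show ?thesis .
    qed
    finally show ?thesis .
  qed
qed


lemma lin_pow_ne0: "([:-w, 1:] :: complex poly) ^ e \<noteq> 0" by simp

lemma order_lin_other:
  assumes "v \<noteq> w"
  shows "order v (([:-w, 1:] :: complex poly) ^ e) = 0"
  by (rule order_0I) (use assms in \<open>simp add: poly_power\<close>)

lemma prod_lin_dvd:
  fixes p :: "complex poly"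
  assumes "finite V"
  shows "p \<noteq> 0 \<Longrightarrow> (\<forall>v\<in>V. [:-v, 1:] ^ e v dvd p) \<Longrightarrow> (\<Prod>v\<in>V. [:-v, 1:] ^ e v) dvd p"
  using assms
proof (induction V arbitrary: p rule: finite_induct)
  case empty then show ?case by simp
next
  case (insert w V)
  obtain q where q: "p = [:-w, 1:] ^ e w * q" using insert.prems(2) by blast
  have q0: "q \<noteq> 0" using insert.prems(1) q by auto
  have "\<forall>v\<in>V. [:-v, 1:] ^ e v dvd q"
  proof
    fix v assume v: "v \<in> V"
    then have vw: "v \<noteq> w" using insert.hyps(2) by auto
    have "[:-v, 1:] ^ e v dvd p" using insert.prems(2) v by blast
    then have "e v \<le> order v p" using insert.prems(1) by (simp add: order_divides)
    also have "order v p = order v q"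
      using q q0 insert.prems(1) by (simp add: order_mult order_lin_other[OF vw])
    finally show "[:-v, 1:] ^ e v dvd q" by (simp add: order_divides)
  qed
  then have "(\<Prod>v\<in>V. [:-v, 1:] ^ e v) dvd q" using insert.IH q0 by blast
  then have "[:-w, 1:] ^ e w * (\<Prod>v\<in>V. [:-v, 1:] ^ e v) dvd p" unfolding q by (rule mult_dvd_mono[OF dvd_refl])
  then show ?case using insert.hyps by simp
qed

lemma degree_prod_lin:
  "degree (\<Prod>v\<in>V. ([:-v, 1:] :: complex poly) ^ e v) = (\<Sum>v\<in>V. e v)"
  by (subst degree_prod_eq_sum_degree) (simp_all add: degree_linear_power)

lemma prod_lin_ne0: "(\<Prod>v\<in>V. ([:-v, 1:] :: complex poly) ^ e v) \<noteq> 0"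
proof (cases "finite V")
  case True then show ?thesis by (simp add: prod_zero_iff)
qed simp

lemma binrep:
  assumes h: "hom n F" and b: "\<forall>i j k. F i j k \<noteq> 0 \<longrightarrow> k = 0"
  defines "p \<equiv> (\<Sum>j\<le>n. monom (F (n - j) j 0) j)"
  shows "F = binf n p" "degree p \<le> n" "(\<exists>i j k. F i j k \<noteq> 0) \<Longrightarrow> p \<noteq> 0"
proof -
  have cp: "coeff p j = (if j \<le> n then F (n - j) j 0 else 0)" for j
    unfolding p_def by (simp add: coeff_sum coeff_monom sum.delta')
  show "F = binf n p"
  proof (intro ext)
    fix i j k
    show "F i j k = binf n p i j k"
    proof (cases "k = 0 \<and> i + j = n")
      case True then show ?thesis by (auto simp: binf_def cp)
    next
      case False
      then have "F i j k = 0" using h b unfolding hom_def by fastforce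
      then show ?thesis using False by (auto simp: binf_def)
    qed
  qed
  show "degree p \<le> n" by (rule degree_le) (simp add: cp)
  assume "\<exists>i j k. F i j k \<noteq> 0"
  then obtain i j k where nz: "F i j k \<noteq> 0" by blast
  have k0: "k = 0" using b nz by blast
  moreover have "i + j + k = n" using h nz unfolding hom_def by blast
  ultimately have "k = 0" "i + j = n" by simp_all
  then have "n - j = i" "j \<le> n" by auto
  then have "coeff p j \<noteq> 0" using nz \<open>k = 0\<close> by (simp add: cp)
  then show "p \<noteq> 0" by auto
qed

lemma sect_binf: "sect D (binf (3 * D) g)"
  unfolding sect_iff by (simp add: hom_binf p1m_def binf_def)

lemma binf_nz: "g \<noteq> 0 \<Longrightarrow> degree g \<le> n \<Longrightarrow> binf n g (n - degree g) (degree g) 0 \<noteq> 0"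
  by (simp add: binf_def)

lemma existence:
  assumes fin: "finite Z" and val: "\<forall>q\<in>Z. valid_pt q"
  shows "\<exists>d c. sect d c \<and> (\<exists>i j k. c i j k \<noteq> 0) \<and> (\<forall>q\<in>Z. mult_ge d c M q)"
proof -
  define V where "V = (\<lambda>q. the (dir q)) ` {q\<in>Z. dir q \<noteq> None}"
  have fV: "finite V" unfolding V_def using fin by simp
  define g where "g = (\<Prod>v\<in>V. ([:-v, 1:] :: complex poly) ^ M)"
  define D where "D = M * card V + M"
  have dg: "degree g = M * card V" unfolding g_def degree_prod_lin by simp
  have g0: "g \<noteq> 0" unfolding g_def by (rule prod_lin_ne0)
  have dg3: "degree g \<le> 3 * D" unfolding D_def dg by simp
  have pc: "pcond D g M q" if q: "q \<in> Z" for q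
  proof (cases "dir q")
    case None
    have "ordq D M q \<le> M" by (simp add: ordq_def split: s1pt.splits)
    then show ?thesis using None unfolding pcond_def D_def dg by simp
  next
    case (Some v)
    then have v: "v \<in> V" unfolding V_def using q by force
    have "ordq D M q \<le> M" by (simp add: ordq_def split: s1pt.splits)
    then have "[:-v, 1:] ^ ordq D M q dvd [:-v, 1:] ^ M" by (rule le_imp_power_dvd)
    also have "[:-v, 1:] ^ M dvd g" unfolding g_def using fV v by (rule dvd_prodI)
    finally show ?thesis using Some unfolding pcond_def by simp
  qed
  show ?thesis
  proof (rule exI[of _ D], rule exI[of _ "binf (3 * D) g"], intro conjI)
    show "sect D (binf (3 * D) g)" by (rule sect_binf)
    show "\<exists>i j k. binf (3 * D) g i j k \<noteq> 0" using binf_nz[OF g0 dg3] by blast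
    show "\<forall>q\<in>Z. mult_ge D (binf (3 * D) g) M q"
      using bin_iff[OF _ g0 dg3] pc val by blast
  qed
qed


lemma comb:
  fixes Ds :: "'a set" and hB :: "'a \<Rightarrow> bool" and d m :: nat
  assumes fin: "finite Ds" and d1: "d \<ge> 1"
    and sF: "(\<Sum>\<delta>\<in>Ds. eF \<delta>) \<le> 3 * d"
    and eF: "\<And>\<delta>. eF \<delta> = (if hB \<delta> then m + 4 else m + 4 - 2 * d)"
    and eG: "\<And>\<delta>. eG \<delta> = (if hB \<delta> then m else m - 2 * (d - 1))"
    and ns: "\<not> (\<exists>\<delta>. Ds = {\<delta>} \<and> \<not> hB \<delta>)"
  shows "(\<Sum>\<delta>\<in>Ds. eG \<delta>) \<le> 3 * d - 3"
proof -
  define P where "P = {\<delta>\<in>Ds. eG \<delta> > 0}"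
  have finP: "finite P" using fin by (simp add: P_def)
  have key: "eG \<delta> + (if eG \<delta> > 0 then 2 else 0) \<le> eF \<delta>" for \<delta>
    unfolding eF eG by (cases "hB \<delta>") auto
  have "(\<Sum>\<delta>\<in>Ds. eG \<delta> + (if eG \<delta> > 0 then 2 else 0)) \<le> (\<Sum>\<delta>\<in>Ds. eF \<delta>)"
    by (rule sum_mono) (rule key)
  moreover have "(\<Sum>\<delta>\<in>Ds. (if eG \<delta> > 0 then 2 else 0)) = (\<Sum>\<delta>\<in>P. (2::nat))"
    unfolding P_def by (rule sum.inter_filter[OF fin, symmetric])
  ultimately have s1: "(\<Sum>\<delta>\<in>Ds. eG \<delta>) + 2 * card P \<le> 3 * d"
    using sF by (simp add: sum.distrib)
  have sP: "(\<Sum>\<delta>\<in>Ds. eG \<delta>) = (\<Sum>\<delta>\<in>P. eG \<delta>)"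
    unfolding P_def by (rule sum.mono_neutral_right) (use fin in auto)
  have eFmin: "eF \<delta> \<ge> m + 4 - 2 * d" for \<delta> unfolding eF by auto
  consider "card P = 0" | "card P = 1" | "card P \<ge> 2" by linarith
  then show ?thesis
  proof cases
    case 1
    then have "P = {}" using finP by simp
    then show ?thesis using sP by simp
  next
    case 3
    then show ?thesis using s1 by linarith
  next
    case 2
    then obtain \<delta>0 where P0: "P = {\<delta>0}" by (rule card_1_singletonE)
    then have d0: "\<delta>0 \<in> Ds" "eG \<delta>0 > 0" unfolding P_def by auto
    have S: "(\<Sum>\<delta>\<in>Ds. eG \<delta>) = eG \<delta>0" using sP P0 by simp
    have le0: "eF \<delta>0 \<le> 3 * d"
      using member_le_sum[of \<delta>0 Ds eF] d0 fin sF by linarith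
    show ?thesis
    proof (cases "hB \<delta>0")
      case True
      then show ?thesis using S le0 unfolding eF eG by simp
    next
      case nb: False
      show ?thesis
      proof (rule ccontr)
        assume "\<not> (\<Sum>\<delta>\<in>Ds. eG \<delta>) \<le> 3 * d - 3"
        then have big: "eG \<delta>0 > 3 * d - 3" using S by simp
        have pos: "m - 2 * (d - 1) > 0" using nb d0(2) unfolding eG by simp
        have e0: "eF \<delta>0 = eG \<delta>0 + 2" unfolding eF eG using nb pos d1 by simp
        then have eq: "eF \<delta>0 = 3 * d" using big le0 d1 by linarith
        have "Ds = {\<delta>0}"
        proof (rule ccontr)
          assume "Ds \<noteq> {\<delta>0}"
          then obtain \<delta> where dd: "\<delta> \<in> Ds" "\<delta> \<noteq> \<delta>0" using d0(1) by blast
          have "eF \<delta>0 = m + 4 - 2 * d" using nb unfolding eF by simp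
          then have "eF \<delta> \<ge> 3 * d" using eFmin[of \<delta>] eq by linarith
          have "(\<Sum>\<delta>'\<in>{\<delta>0, \<delta>}. eF \<delta>') \<le> (\<Sum>\<delta>'\<in>Ds. eF \<delta>')"
            by (rule sum_mono2) (use fin d0 dd in auto)
          then have "eF \<delta>0 + eF \<delta> \<le> 3 * d" using dd sF by simp
          then show False using \<open>eF \<delta> \<ge> 3 * d\<close> eq d1 by linarith
        qed
        then show False using ns nb by blast
      qed
    qed
  qed
qed

lemma split_opt_sum:
  fixes f :: "'b option \<Rightarrow> nat"
  assumes "finite Ds"
  shows "(\<Sum>\<delta>\<in>Ds. f \<delta>) = (\<Sum>v\<in>{v. Some v \<in> Ds}. f (Some v)) + (if None \<in> Ds then f None else 0)"
proof -
  have fV: "finite {v. Some v \<in> Ds}"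
    using assms by (rule finite_subset[rotated, OF finite_imageI[of Ds the]]) force
  have Ds: "Ds = Some ` {v. Some v \<in> Ds} \<union> (Ds \<inter> {None})" by (auto, case_tac x, auto)
  have "(\<Sum>\<delta>\<in>Ds. f \<delta>) = (\<Sum>\<delta>\<in>Some ` {v. Some v \<in> Ds}. f \<delta>) + (\<Sum>\<delta>\<in>Ds \<inter> {None}. f \<delta>)"
    by (subst Ds, rule sum.union_disjoint) (use assms fV in auto)
  also have "(\<Sum>\<delta>\<in>Some ` {v. Some v \<in> Ds}. f \<delta>) = (\<Sum>v\<in>{v. Some v \<in> Ds}. f (Some v))"
    by (rule sum.reindex_cong[of Some]) auto
  also have "(\<Sum>\<delta>\<in>Ds \<inter> {None}. f \<delta>) = (if None \<in> Ds then f None else 0)"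
    by (cases "None \<in> Ds") auto
  finally show ?thesis .
qed

lemma exc_eq:
  assumes "valid_pt (Exc a)" "valid_pt (Exc b)" "dir (Exc a) = dir (Exc b)"
  shows "a = b"
  using assms by (cases a, cases b) (auto simp: normP1_def dir_def split: if_splits)

definition isB :: "s1pt \<Rightarrow> bool" where "isB q = (case q of Base _ \<Rightarrow> True | Exc _ \<Rightarrow> False)"

lemma case4:
  assumes fin: "finite Z" and val: "\<forall>q\<in>Z. valid_pt q" and nsing: "\<not> (\<exists>q. Z = {q})"
    and d1: "d \<ge> 1" and sF: "sect d F" and nzF: "\<exists>i j k. F i j k \<noteq> 0"
    and binF: "\<forall>i j k. F i j k \<noteq> 0 \<longrightarrow> k = 0" and mF: "\<forall>q\<in>Z. mult_ge d F (m + 4) q"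
  shows "\<exists>G. sect (d - 1) G \<and> (\<exists>i j k. G i j k \<noteq> 0) \<and> (\<forall>q\<in>Z. mult_ge (d - 1) G m q)"
proof -
  have hF: "hom (3 * d) F" using sF by (simp add: sect_iff)
  define p where "p = (\<Sum>j\<le>3 * d. monom (F (3 * d - j) j 0) j)"
  have Fp: "F = binf (3 * d) p" unfolding p_def by (rule binrep(1)[OF hF binF])
  have dp: "degree p \<le> 3 * d" unfolding p_def by (rule binrep(2)[OF hF binF])
  have p0: "p \<noteq> 0" unfolding p_def by (rule binrep(3)[OF hF binF nzF])
  have pF: "pcond d p (m + 4) q" if "q \<in> Z" for q
  proof -
    have "mult_ge d F (m + 4) q" using mF that by blast
    then have "mult_ge d (binf (3 * d) p) (m + 4) q" by (simp only: Fp)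
    moreover have "valid_pt q" using val that by blast
    ultimately show ?thesis using bin_iff[OF _ p0 dp] by blast
  qed
  define Ds where "Ds = dir ` Z"
  have fD: "finite Ds" unfolding Ds_def using fin by simp
  define hB where "hB \<delta> = (\<exists>q\<in>Z. dir q = \<delta> \<and> isB q)" for \<delta>
  define eF where "eF \<delta> = (if hB \<delta> then m + 4 else m + 4 - 2 * d)" for \<delta>
  define eG where "eG \<delta> = (if hB \<delta> then m else m - 2 * (d - 1))" for \<delta>
  define V where "V = {v. Some v \<in> Ds}"
  have fV: "finite V" unfolding V_def
    using fD by (rule finite_subset[rotated, OF finite_imageI[of Ds the]]) force
  have wit: "\<exists>q\<in>Z. dir q = \<delta> \<and> ordq d (m + 4) q = eF \<delta>" if dD: "\<delta> \<in> Ds" for \<delta>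
  proof (cases "hB \<delta>")
    case True
    then obtain q where q: "q \<in> Z" "dir q = \<delta>" "isB q" unfolding hB_def by blast
    have o: "ordq d (m + 4) q = m + 4" using q(3) by (cases q) (auto simp: ordq_def isB_def)
    show ?thesis using q o True unfolding eF_def by auto
  next
    case False
    obtain q where q: "q \<in> Z" "dir q = \<delta>" using dD unfolding Ds_def by blast
    then have "\<not> isB q" using False unfolding hB_def by blast
    then have o: "ordq d (m + 4) q = m + 4 - 2 * d" by (cases q) (auto simp: ordq_def isB_def)
    show ?thesis using q o False unfolding eF_def by auto
  qed
  have ordG: "ordq (d - 1) m q \<le> eG (dir q)" if "q \<in> Z" for q
  proof (cases "isB q")
    case True
    then have "hB (dir q)" unfolding hB_def using that by blast
    moreover have "ordq (d - 1) m q = m" using True by (cases q) (auto simp: ordq_def isB_def)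
    ultimately show ?thesis unfolding eG_def by simp
  next
    case False
    then have "ordq (d - 1) m q = m - 2 * (d - 1)" by (cases q) (auto simp: ordq_def isB_def)
    then show ?thesis unfolding eG_def by simp
  qed
  have dvF: "[:-v, 1:] ^ eF (Some v) dvd p" if vV: "v \<in> V" for v
  proof -
    have "Some v \<in> Ds" using vV unfolding V_def by simp
    from wit[OF this] obtain q where q: "q \<in> Z" "dir q = Some v" "ordq d (m + 4) q = eF (Some v)"
      by blast
    then show ?thesis using pF[OF q(1)] unfolding pcond_def by simp
  qed
  have sumV: "(\<Sum>v\<in>V. eF (Some v)) \<le> degree p"
  proof -
    have "(\<Prod>v\<in>V. [:-v, 1:] ^ eF (Some v)) dvd p"
      by (rule prod_lin_dvd[OF fV p0]) (use dvF in blast)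
    then have "degree (\<Prod>v\<in>V. [:-v, 1:] ^ eF (Some v)) \<le> degree p"
      using p0 prod_lin_ne0 by (intro dvd_imp_degree) auto
    then show ?thesis by (simp add: degree_prod_lin)
  qed
  have nD: "degree p + eF None \<le> 3 * d" if nDs: "None \<in> Ds"
  proof -
    from wit[OF nDs] obtain q where q: "q \<in> Z" "dir q = None" "ordq d (m + 4) q = eF None"
      by blast
    then show ?thesis using pF[OF q(1)] unfolding pcond_def by simp
  qed
  have sF3: "(\<Sum>\<delta>\<in>Ds. eF \<delta>) \<le> 3 * d"
    unfolding split_opt_sum[OF fD] V_def[symmetric] using sumV nD dp by (auto split: if_splits)
  have ns: "\<not> (\<exists>\<delta>. Ds = {\<delta>} \<and> \<not> hB \<delta>)"
  proof
    assume "\<exists>\<delta>. Ds = {\<delta>} \<and> \<not> hB \<delta>"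
    then obtain \<delta> where D1: "Ds = {\<delta>}" and nb: "\<not> hB \<delta>" by blast
    have allE: "\<exists>ab. q = Exc ab" if "q \<in> Z" for q
    proof -
      have "dir q = \<delta>" using that D1 unfolding Ds_def by blast
      then have "\<not> isB q" using nb that unfolding hB_def by blast
      then show ?thesis unfolding isB_def by (cases q) auto
    qed
    have "Z \<noteq> {}" using D1 unfolding Ds_def by auto
    then obtain q0 where q0: "q0 \<in> Z" by blast
    have "Z = {q0}"
    proof (intro set_eqI iffI)
      fix q assume q: "q \<in> Z"
      obtain a where a: "q = Exc a" using allE[OF q] by blast
      obtain b where b: "q0 = Exc b" using allE[OF q0] by blast
      have "dir q \<in> Ds" "dir q0 \<in> Ds" using q q0 unfolding Ds_def by auto
      then have "dir q = dir q0" using D1 by auto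
      moreover have "valid_pt (Exc a)" "valid_pt (Exc b)" using val q q0 a b by auto
      ultimately have "a = b" using exc_eq[of a b] a b by simp
      then show "q \<in> {q0}" using a b by simp
    qed (use q0 in simp)
    then show False using nsing by blast
  qed
  have sG: "(\<Sum>\<delta>\<in>Ds. eG \<delta>) \<le> 3 * d - 3"
    by (rule comb[OF fD d1 sF3 _ _ ns]) (simp_all add: eF_def eG_def)
  define g where "g = (\<Prod>v\<in>V. ([:-v, 1:] :: complex poly) ^ eG (Some v))"
  have g0: "g \<noteq> 0" unfolding g_def by (rule prod_lin_ne0)
  have dgs: "degree g + (if None \<in> Ds then eG None else 0) \<le> 3 * (d - 1)"
    using sG unfolding g_def degree_prod_lin split_opt_sum[OF fD] V_def by simp
  then have dg: "degree g \<le> 3 * (d - 1)" by simp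
  have pG: "pcond (d - 1) g m q" if q: "q \<in> Z" for q
  proof (cases "dir q")
    case None
    then have "None \<in> Ds" unfolding Ds_def using q by force
    then show ?thesis using None dgs ordG[OF q] unfolding pcond_def by simp
  next
    case (Some v)
    then have v: "v \<in> V" unfolding V_def Ds_def using q by force
    have "[:-v, 1:] ^ ordq (d - 1) m q dvd [:-v, 1:] ^ eG (Some v)"
      using ordG[OF q] Some by (intro le_imp_power_dvd) simp
    also have "[:-v, 1:] ^ eG (Some v) dvd g" unfolding g_def using fV v by (rule dvd_prodI)
    finally show ?thesis using Some unfolding pcond_def by simp
  qed
  show ?thesis
  proof (rule exI[of _ "binf (3 * (d - 1)) g"], intro conjI)
    show "sect (d - 1) (binf (3 * (d - 1)) g)" by (rule sect_binf)
    show "\<exists>i j k. binf (3 * (d - 1)) g i j k \<noteq> 0" using binf_nz[OF g0 dg] by blast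
    show "\<forall>q\<in>Z. mult_ge (d - 1) (binf (3 * (d - 1)) g) m q"
      using bin_iff[OF _ g0 dg] pG val by blast
  qed
qed

lemma sect0_zero:
  assumes "mult_ge 0 F M q" "M \<ge> 1"
  shows "F 0 0 0 = 0"
proof (cases q)
  case (Base p)
  obtain x y z where p: "p = (x, y, z)" by (cases p) auto
  have "\<forall>a b e. a + b + e < M \<longrightarrow>
        (\<Sum>i\<le>3*0. \<Sum>j\<le>3*0. \<Sum>k\<le>3*0.
           F i j k * of_nat (i choose a) * of_nat (j choose b) * of_nat (k choose e)
           * x ^ (i - a) * y ^ (j - b) * z ^ (k - e)) = 0"
    using assms(1) unfolding Base p by (simp only: mult_ge.simps)
  moreover have "(0::nat) + 0 + 0 < M" using assms(2) by simp
  ultimately have "(\<Sum>i\<le>3*0. \<Sum>j\<le>3*0. \<Sum>k\<le>3*0.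
           F i j k * of_nat (i choose 0) * of_nat (j choose 0) * of_nat (k choose 0)
           * x ^ (i - 0) * y ^ (j - 0) * z ^ (k - 0)) = 0" by blast
  then show ?thesis by simp
next
  case (Exc ab)
  obtain a b where ab: "ab = (a, b)" by (cases ab) auto
  have M0: "(0::nat) + 0 < M" using assms(2) by simp
  show ?thesis
  proof (cases "a \<noteq> 0")
    case True
    have "\<forall>s t. s + t < M \<longrightarrow> (\<Sum>i\<le>3*0. \<Sum>j\<le>3*0. \<Sum>k\<le>3*0.
             if i + j = s + 0 then F i j k * of_nat (j choose t) * (b / a) ^ (j - t) else 0) = 0"
      using assms(1) unfolding Exc ab by (simp only: mult_ge.simps if_P[OF True])
    then have "(\<Sum>i\<le>3*0. \<Sum>j\<le>3*0. \<Sum>k\<le>3*0.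
             if i + j = 0 + 0 then F i j k * of_nat (j choose 0) * (b / a) ^ (j - 0) else 0) = 0"
      using M0 by blast
    then show ?thesis by simp
  next
    case False
    have "\<forall>s t. s + t < M \<longrightarrow> (\<Sum>i\<le>3*0. \<Sum>j\<le>3*0. \<Sum>k\<le>3*0.
             if i + j = s + 0 then F i j k * of_nat (i choose t) * (a / b) ^ (i - t) else 0) = 0"
      using assms(1) unfolding Exc ab by (simp only: mult_ge.simps if_not_P[OF False])
    then have "(\<Sum>i\<le>3*0. \<Sum>j\<le>3*0. \<Sum>k\<le>3*0.
             if i + j = 0 + 0 then F i j k * of_nat (i choose 0) * (a / b) ^ (i - 0) else 0) = 0"
      using M0 by blast
    then show ?thesis by simp
  qed
qed

lemma sect0_nz:
  assumes "sect 0 F" "\<exists>i j k. F i j k \<noteq> 0"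
  shows "F 0 0 0 \<noteq> 0"
  using assms unfolding sect_def by fastforce

theorem mainTheorem2:
  fixes Z :: "s1pt set" and m :: nat
  assumes "finite Z" and "Z \<noteq> {}" and "\<forall>q\<in>Z. valid_pt q"
    and "m \<ge> 1"
    and "alpha Z m = alpha Z (m + 1)" and "alpha Z (m + 1) = alpha Z (m + 2)"
    and "alpha Z (m + 2) = alpha Z (m + 3)" and "alpha Z (m + 3) = alpha Z (m + 4)"
  shows "\<exists>q. Z = {q}"
proof (rule ccontr)
  assume nsing: "\<not> (\<exists>q. Z = {q})"
  define P where "P M d \<longleftrightarrow> (\<exists>c. sect d c \<and> (\<exists>i j k. c i j k \<noteq> 0) \<and> (\<forall>q\<in>Z. mult_ge d c M q))" for M d
  have aeq: "alpha Z M = (LEAST d. P M d)" for M unfolding alpha_def P_def by simp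
  have ex: "\<exists>d. P (m + 4) d" using existence[OF assms(1) assms(3)] unfolding P_def by blast
  define d0 where "d0 = alpha Z (m + 4)"
  have "P (m + 4) d0" unfolding d0_def aeq by (rule LeastI_ex[OF ex])
  then obtain F where sF: "sect d0 F" and nzF: "\<exists>i j k. F i j k \<noteq> 0" and mF: "\<forall>q\<in>Z. mult_ge d0 F (m + 4) q"
    unfolding P_def by blast
  have am: "alpha Z m = d0" using assms(5-8) unfolding d0_def by simp
  have d1: "d0 \<ge> 1"
  proof (rule ccontr)
    assume "\<not> d0 \<ge> 1"
    then have z: "d0 = 0" by simp
    obtain q where q: "q \<in> Z" using assms(2) by blast
    have "F 0 0 0 = 0" using sect0_zero[of F "m + 4" q] mF q z by simp
    then show False using sect0_nz[of F] sF nzF z by simp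
  qed
  have "\<exists>G. sect (d0 - 1) G \<and> (\<exists>i j k. G i j k \<noteq> 0) \<and> (\<forall>q\<in>Z. mult_ge (d0 - 1) G m q)"
  proof (cases "\<forall>i j k. F i j k \<noteq> 0 \<longrightarrow> k = 0")
    case True
    then show ?thesis using case4[OF assms(1) assms(3) nsing d1 sF nzF True mF] by blast
  next
    case False
    then have "\<exists>i j k. F i j k \<noteq> 0 \<and> k \<noteq> 0" by blast
    then show ?thesis using nonbin[OF d1 sF mF] by blast
  qed
  then have "P m (d0 - 1)" unfolding P_def by blast
  then have "alpha Z m \<le> d0 - 1" unfolding aeq by (rule Least_le)
  then show False using am d1 by simp
qed


end
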